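(* Let $d$ be a positive integer, $P$ a finite poset and $c\ge 0$. (i) If $\limsup_{k\to\infty}\frac{La([k]^d,P)}{w_{k,d}}\le c$, then $\limsup_{n\to\infty}\frac{La(n,P)}{\binom{n}{\lfloor n/2\rfloor}}\le c$. (ii) If $\limsup_{k\to\infty}\frac{La^*([k]^d,P)}{w_{k,d}}\le c$, then $\limsup_{n\to\infty}\frac{La^*(n,P)}{\binom{n}{\lfloor n/2\rfloor}}\le c$.
   Context: $[k]^d=\{1,\dots,k\}^d$ ordered coordinatewise; $w_{k,d}$ is the size of a largest antichain in $[k]^d$. For posets $P,R$: $P$ is a weak subposet of $R$ if there is an injection $i:P\to R$ with $p\le_P p'\Rightarrow i(p)\le_R i(p')$; it is a strong subposet if moreover $p\le_P p'\iff i(p)\le_R i(p')$. A subset of a poset is weak (strong) $P$-free if, with the induced order, it does not contain $P$ as a weak (strong) subposet. $La(Q,P)$ and $La^*(Q,P)$ denote the maximum size of a weak, respectively strong, $P$-free subset of the poset $Q$. $La(n,P)=La(Q_n,P)$ and $La^*(n,P)=La^*(Q_n,P)$, where $Q_n$ is the poset of all subsets of an $n$-element set ordered by inclusion. *)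

theory Defs
  imports Main "HOL-Library.Extended_Real" "HOL-Library.Liminf_Limsup"
begin

definition finite_poset :: "'a set \<Rightarrow> ('a \<Rightarrow> 'a \<Rightarrow> bool) \<Rightarrow> bool" where
  "finite_poset A le \<longleftrightarrow> finite A \<and>
     (\<forall>x\<in>A. le x x) \<and>
     (\<forall>x\<in>A. \<forall>y\<in>A. le x y \<and> le y x \<longrightarrow> x = y) \<and>
     (\<forall>x\<in>A. \<forall>y\<in>A. \<forall>z\<in>A. le x y \<and> le y z \<longrightarrow> le x z)"

definition weak_subposet :: "'a set \<Rightarrow> ('a \<Rightarrow> 'a \<Rightarrow> bool) \<Rightarrow> 'b set \<Rightarrow> ('b \<Rightarrow> 'b \<Rightarrow> bool) \<Rightarrow> bool" where
  "weak_subposet A leA B leB \<longleftrightarrow> (\<exists>i. inj_on i A \<and> i ` A \<subseteq> B \<and>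
     (\<forall>p\<in>A. \<forall>p'\<in>A. leA p p' \<longrightarrow> leB (i p) (i p')))"

definition strong_subposet :: "'a set \<Rightarrow> ('a \<Rightarrow> 'a \<Rightarrow> bool) \<Rightarrow> 'b set \<Rightarrow> ('b \<Rightarrow> 'b \<Rightarrow> bool) \<Rightarrow> bool" where
  "strong_subposet A leA B leB \<longleftrightarrow> (\<exists>i. inj_on i A \<and> i ` A \<subseteq> B \<and>
     (\<forall>p\<in>A. \<forall>p'\<in>A. leA p p' \<longleftrightarrow> leB (i p) (i p')))"

definition La_poset :: "'b set \<Rightarrow> ('b \<Rightarrow> 'b \<Rightarrow> bool) \<Rightarrow> 'a set \<Rightarrow> ('a \<Rightarrow> 'a \<Rightarrow> bool) \<Rightarrow> nat" where
  "La_poset Q leQ P leP = Sup (card ` {F. F \<subseteq> Q \<and> \<not> weak_subposet P leP F leQ})"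

definition La_star_poset :: "'b set \<Rightarrow> ('b \<Rightarrow> 'b \<Rightarrow> bool) \<Rightarrow> 'a set \<Rightarrow> ('a \<Rightarrow> 'a \<Rightarrow> bool) \<Rightarrow> nat" where
  "La_star_poset Q leQ P leP = Sup (card ` {F. F \<subseteq> Q \<and> \<not> strong_subposet P leP F leQ})"

definition grid :: "nat \<Rightarrow> nat \<Rightarrow> nat list set" where
  "grid k d = {x. length x = d \<and> set x \<subseteq> {1..k}}"

definition grid_le :: "nat list \<Rightarrow> nat list \<Rightarrow> bool" where
  "grid_le x y \<longleftrightarrow> list_all2 (\<le>) x y"

definition cube :: "nat \<Rightarrow> nat set set" where
  "cube n = Pow {0..<n}"

definition antichain_in :: "('b \<Rightarrow> 'b \<Rightarrow> bool) \<Rightarrow> 'b set \<Rightarrow> bool" where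
  "antichain_in le S \<longleftrightarrow> (\<forall>x\<in>S. \<forall>y\<in>S. x \<noteq> y \<longrightarrow> \<not> le x y)"

definition width_grid :: "nat \<Rightarrow> nat \<Rightarrow> nat" where
  "width_grid k d = Sup (card ` {S. S \<subseteq> grid k d \<and> antichain_in grid_le S})"

definition La :: "nat \<Rightarrow> 'a set \<Rightarrow> ('a \<Rightarrow> 'a \<Rightarrow> bool) \<Rightarrow> nat" where
  "La n P leP = La_poset (cube n) (\<subseteq>) P leP"

definition La_star :: "nat \<Rightarrow> 'a set \<Rightarrow> ('a \<Rightarrow> 'a \<Rightarrow> bool) \<Rightarrow> nat" where
  "La_star n P leP = La_star_poset (cube n) (\<subseteq>) P leP"

end

theory Submission
  imports Defs "HOL-Combinatorics.Permutations" "HOL-Probability.Hoeffding" "HOL-Real_Asymp.Real_Asymp"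
begin

fun lo :: "nat list \<Rightarrow> nat" where "lo [] = 0" | "lo (i#j) = lo j + i"

fun ec :: "nat \<Rightarrow> nat list \<Rightarrow> nat \<Rightarrow> nat list" where
 "ec k [] q = []" |
 "ec k (i#j) q = (let L = length j * (k-1) - 2*lo j; la = q - lo j in
    if la \<le> L then Suc i # ec k j (lo j + la - i) else Suc (la - (L - i)) # ec k j (lo j + (L - i)))"

fun Jc :: "nat \<Rightarrow> nat \<Rightarrow> nat list set" where
 "Jc k 0 = {[]}" |
 "Jc k (Suc d) = {i#j | i j. j \<in> Jc k d \<and> i < k \<and> i \<le> d*(k-1) - 2*lo j}"

lemma grid_Cons: "(y # x \<in> grid k (Suc d)) \<longleftrightarrow> y \<in> {1..k} \<and> x \<in> grid k d"
  by (auto simp: grid_def)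

lemma grid_le_Cons: "grid_le (a # x) (b # y) \<longleftrightarrow> a \<le> b \<and> grid_le x y"
  by (simp add: grid_le_def)

lemma scd_basic:
  assumes "k \<ge> 1" "j \<in> Jc k d"
  shows "length j = d \<and> 2*lo j \<le> d*(k-1) \<and>
    (\<forall>q. lo j \<le> q \<longrightarrow> q \<le> d*(k-1) - lo j \<longrightarrow> ec k j q \<in> grid k d \<and> sum_list (ec k j q) = d + q) \<and>
    (\<forall>q. lo j \<le> q \<longrightarrow> Suc q \<le> d*(k-1) - lo j \<longrightarrow> grid_le (ec k j q) (ec k j (Suc q)))"
  using assms(2)
proof (induction d arbitrary: j)
  case 0
  then show ?case by (auto simp: grid_def grid_le_def)
next
  case (Suc d)
  from Suc.prems obtain i j' where j: "j = i # j'" "j' \<in> Jc k d" "i < k" "i \<le> d*(k-1) - 2*lo j'"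
    by auto
  note IH = Suc.IH[OF j(2)]
  define D where "D = d*(k-1)"
  define L where "L = D - 2*lo j'"
  have len: "length j' = d" and lo2: "2*lo j' \<le> D" using IH D_def by auto
  have SD: "Suc d * (k-1) = D + (k-1)" using D_def by simp
  note IH = IH[folded D_def]
  have iL: "i \<le> L" using j(4) L_def D_def by simp
  have ec_eq: "ec k j q = (if q - lo j' \<le> L then Suc i # ec k j' (lo j' + (q - lo j') - i)
      else Suc ((q - lo j') - (L - i)) # ec k j' (lo j' + (L - i)))" for q
    using j(1) len L_def D_def by (simp add: Let_def)
  have P1: "ec k j q \<in> grid k (Suc d) \<and> sum_list (ec k j q) = Suc d + q"
    if q: "lo j \<le> q" "q \<le> Suc d*(k-1) - lo j" for q
  proof -
    have q1: "lo j' + i \<le> q" "q + lo j' + i \<le> D + (k-1)" using q j(1) SD by auto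
    show ?thesis
    proof (cases "q - lo j' \<le> L")
      case True
      have r: "lo j' \<le> lo j' + (q - lo j') - i" "lo j' + (q - lo j') - i \<le> D - lo j'"
        using True q1 L_def lo2 by linarith+
      have "ec k j' (lo j' + (q - lo j') - i) \<in> grid k d \<and> sum_list (ec k j' (lo j' + (q - lo j') - i)) = d + (lo j' + (q - lo j') - i)"
        using IH r by blast
      then show ?thesis using True ec_eq[of q] j(3) q1 by (auto simp: grid_Cons)
    next
      case False
      have r: "lo j' \<le> lo j' + (L - i)" "lo j' + (L - i) \<le> D - lo j'"
        using q1 L_def lo2 by linarith+
      have "ec k j' (lo j' + (L - i)) \<in> grid k d \<and> sum_list (ec k j' (lo j' + (L - i))) = d + (lo j' + (L - i))"
        using IH r by blast
      moreover have "Suc ((q - lo j') - (L - i)) \<le> k" using q1 False L_def lo2 iL assms(1) by linarith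
      ultimately show ?thesis using False ec_eq[of q] q1 iL by (auto simp: grid_Cons)
    qed
  qed
  have P2: "grid_le (ec k j q) (ec k j (Suc q))"
    if q: "lo j \<le> q" "Suc q \<le> Suc d*(k-1) - lo j" for q
  proof -
    have q1: "lo j' + i \<le> q" "Suc q + lo j' + i \<le> D + (k-1)" using q j(1) SD by auto
    consider "Suc q - lo j' \<le> L" | "q - lo j' = L" | "q - lo j' > L" by linarith
    then show ?thesis
    proof cases
      case 1
      have r: "lo j' \<le> lo j' + (q - lo j') - i" "Suc (lo j' + (q - lo j') - i) \<le> D - lo j'"
        using 1 q1 L_def lo2 by linarith+
      have e: "lo j' + (Suc q - lo j') - i = Suc (lo j' + (q - lo j') - i)" using q1 by auto
      show ?thesis using IH r 1 ec_eq[of q] ec_eq[of "Suc q"] e by (auto simp: grid_le_Cons)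
    next
      case 2
      have e: "lo j' + (q - lo j') - i = lo j' + (L - i)" using 2 iL by simp
      have "grid_le (ec k j' (lo j' + (L - i))) (ec k j' (lo j' + (L - i)))"
        unfolding grid_le_def by (simp add: list_all2_refl)
      then show ?thesis using 2 ec_eq[of q] ec_eq[of "Suc q"] e q1 by (auto simp: grid_le_Cons)
    next
      case 3
      have "grid_le (ec k j' (lo j' + (L - i))) (ec k j' (lo j' + (L - i)))"
        unfolding grid_le_def by (simp add: list_all2_refl)
      then show ?thesis using 3 ec_eq[of q] ec_eq[of "Suc q"] q1 by (auto simp: grid_le_Cons)
    qed
  qed
  have "2 * lo j \<le> Suc d * (k-1)" using j(1) j(3) iL L_def lo2 SD by auto
  then show ?case using P1 P2 len j(1) by auto
qed

lemma scd_cover: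
  assumes "k \<ge> 1" "x \<in> grid k d"
  shows "\<exists>j\<in>Jc k d. \<exists>q. lo j \<le> q \<and> q \<le> d*(k-1) - lo j \<and> x = ec k j q"
  using assms(2)
proof (induction d arbitrary: x)
  case 0
  then show ?case by (auto simp: grid_def)
next
  case (Suc d)
  from Suc.prems obtain y x' where x: "x = y # x'" "y \<in> {1..k}" "x' \<in> grid k d"
    by (cases x) (auto simp: grid_def)
  from Suc.IH[OF x(3)] obtain j' q' where jq: "j' \<in> Jc k d" "lo j' \<le> q'" "q' \<le> d*(k-1) - lo j'" "x' = ec k j' q'"
    by blast
  define D where "D = d*(k-1)"
  define L where "L = D - 2*lo j'"
  have len: "length j' = d" and lo2: "2*lo j' \<le> D" using scd_basic[OF assms(1) jq(1)] D_def by auto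
  have SD: "Suc d * (k-1) = D + (k-1)" using D_def by simp
  define p where "p = q' - lo j'"
  define y0 where "y0 = y - 1"
  have y0: "y = Suc y0" "y0 \<le> k - 1" using x(2) y0_def by auto
  have pL: "p \<le> L" using jq(3) p_def L_def D_def lo2 by linarith
  have ec_eq: "ec k (i # j') q = (if q - lo j' \<le> L then Suc i # ec k j' (lo j' + (q - lo j') - i)
      else Suc ((q - lo j') - (L - i)) # ec k j' (lo j' + (L - i)))" for q i
    using len L_def D_def by (simp add: Let_def)
  show ?case
  proof (cases "p + y0 \<le> L")
    case True
    have ik: "y0 < k" "y0 \<le> L" using True y0 assms(1) by linarith+
    have "y0 # j' \<in> Jc k (Suc d)" using jq(1) ik L_def D_def by auto
    moreover have "lo (y0 # j') \<le> q' + y0" "q' + y0 \<le> Suc d*(k-1) - lo (y0#j')"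
    proof -
      have a3: "lo j' + L + lo j' = D" using L_def lo2 by simp
      have a4: "q' = lo j' + p" using p_def jq(2) by simp
      show "lo (y0 # j') \<le> q' + y0" using a4 by simp
      show "q' + y0 \<le> Suc d*(k-1) - lo (y0#j')" unfolding SD using True a3 a4 y0 by simp
    qed
    moreover have "x = ec k (y0 # j') (q' + y0)"
    proof -
      have a: "q' + y0 - lo j' = p + y0" using p_def jq(2) by simp
      have e1: "ec k (y0 # j') (q' + y0) = Suc y0 # ec k j' (lo j' + (p + y0) - y0)"
        unfolding ec_eq[where q="q' + y0" and i=y0] a using True by simp
      have e2: "lo j' + (p + y0) - y0 = q'" using p_def jq(2) by simp
      show ?thesis using e1 e2 x(1) jq(4) y0(1) by simp
    qed
    ultimately show ?thesis by blast
  next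
    case False
    define i where "i = L - p"
    have ik: "i < k" "i \<le> L" using False y0 i_def assms(1) by linarith+
    have "i # j' \<in> Jc k (Suc d)" using jq(1) ik L_def D_def by auto
    moreover have "lo (i # j') \<le> q' + y0" "q' + y0 \<le> Suc d*(k-1) - lo (i#j')"
    proof -
      have a1: "i < y0" using False i_def p_def L_def pL by linarith
      have a2: "lo j' + i + p = lo j' + L" using i_def pL by simp
      have a3: "lo j' + L + lo j' = D" using L_def lo2 by simp
      have a4: "q' = lo j' + p" using p_def jq(2) by simp
      show "lo (i # j') \<le> q' + y0" using a1 a4 by simp
      show "q' + y0 \<le> Suc d*(k-1) - lo (i#j')" unfolding SD using a2 a3 a4 y0 by simp
    qed
    moreover have "x = ec k (i # j') (q' + y0)"
    proof -
      have a: "q' + y0 - lo j' = p + y0" using p_def jq(2) by simp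
      have b: "L - i = p" using i_def pL by simp
      have e1: "ec k (i # j') (q' + y0) = Suc (p + y0 - (L - i)) # ec k j' (lo j' + (L - i))"
        unfolding ec_eq[where q="q' + y0" and i=i] a using False by simp
      have e2: "lo j' + p = q'" using p_def jq(2) by simp
      show ?thesis using e1 e2 b x(1) jq(4) y0(1) by simp
    qed
    ultimately show ?thesis by blast
  qed
qed

lemma scd_disj:
  assumes "k \<ge> 1" "j \<in> Jc k d" "j' \<in> Jc k d"
    "lo j \<le> q" "q \<le> d*(k-1) - lo j" "lo j' \<le> q'" "q' \<le> d*(k-1) - lo j'"
    "ec k j q = ec k j' q'"
  shows "j = j' \<and> q = q'"
  using assms(2-)
proof (induction d arbitrary: j j' q q')
  case 0
  then show ?case by auto
next
  case (Suc d)
  have qq: "q = q'" using scd_basic[OF assms(1) Suc.prems(1)] scd_basic[OF assms(1) Suc.prems(2)] Suc.prems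
    by (metis add_left_cancel)
  from Suc.prems obtain i j1 where j: "j = i # j1" "j1 \<in> Jc k d" "i < k" "i \<le> d*(k-1) - 2*lo j1"
    by auto
  from Suc.prems obtain i' j1' where j': "j' = i' # j1'" "j1' \<in> Jc k d" "i' < k" "i' \<le> d*(k-1) - 2*lo j1'"
    by auto
  define D where "D = d*(k-1)"
  have SD: "Suc d * (k-1) = D + (k-1)" using D_def by simp
  have len: "length j1 = d" "length j1' = d" and lo2: "2*lo j1 \<le> D" "2*lo j1' \<le> D"
    using scd_basic[OF assms(1) j(2)] scd_basic[OF assms(1) j'(2)] D_def by auto
  have ec_eq: "ec k (i # j1) q = (if q - lo j1 \<le> D - 2*lo j1 then Suc i # ec k j1 (lo j1 + (q - lo j1) - i)
      else Suc ((q - lo j1) - (D - 2*lo j1 - i)) # ec k j1 (lo j1 + (D - 2*lo j1 - i)))"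
    if "length j1 = d" for q i j1
    using that D_def by (simp add: Let_def)
  have q1: "lo j1 + i \<le> q" "q + lo j1 + i \<le> D + (k-1)" using Suc.prems j(1) SD by auto
  have q2: "lo j1' + i' \<le> q" "q + lo j1' + i' \<le> D + (k-1)" using Suc.prems j'(1) SD qq by auto
  have iL: "i \<le> D - 2*lo j1" "i' \<le> D - 2*lo j1'" using j j' D_def by auto
  define a where "a = (if q - lo j1 \<le> D - 2*lo j1 then lo j1 + (q - lo j1) - i else lo j1 + (D - 2*lo j1 - i))"
  define a' where "a' = (if q - lo j1' \<le> D - 2*lo j1' then lo j1' + (q - lo j1') - i' else lo j1' + (D - 2*lo j1' - i'))"
  have ra: "lo j1 \<le> a \<and> a \<le> D - lo j1"
  proof (cases "q - lo j1 \<le> D - 2*lo j1")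
    case True then show ?thesis unfolding a_def using q1 lo2 iL by (simp; linarith)
  next
    case False then show ?thesis unfolding a_def using q1 lo2 iL by (simp; linarith)
  qed
  have ra': "lo j1' \<le> a' \<and> a' \<le> D - lo j1'"
  proof (cases "q - lo j1' \<le> D - 2*lo j1'")
    case True then show ?thesis unfolding a'_def using q2 lo2 iL by (simp; linarith)
  next
    case False then show ?thesis unfolding a'_def using q2 lo2 iL by (simp; linarith)
  qed
  have t1: "tl (ec k (i#j1) q) = ec k j1 a" unfolding ec_eq[OF len(1)] a_def
    by (cases "q - lo j1 \<le> D - 2*lo j1") simp_all
  have t2: "tl (ec k (i'#j1') q) = ec k j1' a'" unfolding ec_eq[OF len(2)] a'_def
    by (cases "q - lo j1' \<le> D - 2*lo j1'") simp_all
  have tl_eq: "ec k j1 a = ec k j1' a'"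
    using Suc.prems(7) t1 t2 qq j(1) j'(1) by metis
  have "j1 = j1' \<and> a = a'" using Suc.IH[OF j(2) j'(2) _ _ _ _ tl_eq] D_def ra ra' by simp
  then have same: "j1 = j1'" "a = a'" by auto
  have hd_eq: "hd (ec k j q) = hd (ec k j' q')" using Suc.prems(7) by simp
  have "i = i'"
  proof (cases "q - lo j1 \<le> D - 2*lo j1")
    case True
    have "hd (ec k (i#j1) q) = Suc i" unfolding ec_eq[OF len(1)] using True by simp
    moreover have "hd (ec k (i'#j1) q) = Suc i'" unfolding ec_eq[OF len(1)] using True by simp
    ultimately show ?thesis using hd_eq qq j(1) j'(1) same by simp
  next
    case False
    then have "lo j1 + (D - 2*lo j1 - i) = lo j1 + (D - 2*lo j1 - i')" using same unfolding a_def a'_def by simp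
    then show ?thesis using iL same by simp
  qed
  then show ?case using same qq j(1) j'(1) by simp
qed

lemma scd_chain:
  assumes "k \<ge> 1" "j \<in> Jc k d" "lo j \<le> q" "q \<le> q'" "q' \<le> d*(k-1) - lo j"
  shows "grid_le (ec k j q) (ec k j q')"
  using assms(4,5)
proof (induction q' rule: dec_induct)
  case base
  then show ?case unfolding grid_le_def by (simp add: list_all2_refl)
next
  case (step m)
  have "grid_le (ec k j m) (ec k j (Suc m))" using scd_basic[OF assms(1,2)] assms(3) step by auto
  moreover have "grid_le (ec k j q) (ec k j m)" using step by simp
  ultimately show ?case unfolding grid_le_def using list_all2_trans[of "(\<le>)" "(\<le>)" "(\<le>)"]
    by (meson order_trans)
qed

definition levz :: "nat \<Rightarrow> nat \<Rightarrow> int \<Rightarrow> nat list set" where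
  "levz k d z = {x \<in> grid k d. int (sum_list x) = z}"

lemma grid_alt: "grid k d = {xs. set xs \<subseteq> {1..k} \<and> length xs = d}"
  by (auto simp: grid_def)

lemma finite_grid: "finite (grid k d)"
  unfolding grid_alt by (rule finite_lists_length_eq) simp

lemma card_grid: "card (grid k d) = k ^ d"
  unfolding grid_alt by (subst card_lists_length_eq) simp_all

lemma finite_levz: "finite (levz k d z)"
  unfolding levz_def using finite_grid by simp

lemma grid_le_sum_eq:
  assumes "grid_le x y" "sum_list x = sum_list y"
  shows "x = y"
  using assms unfolding grid_le_def
proof (induction x y rule: list_all2_induct)
  case Nil
  then show ?case by simp
next
  case (Cons a x b y)
  have "sum_list x \<le> sum_list y"
    using Cons.hyps(2)
    by (induction x y rule: list_all2_induct) auto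
  then have "a = b" "sum_list x = sum_list y" using Cons by auto
  then show ?case using Cons by simp
qed

lemma antichain_levz: "antichain_in grid_le (levz k d z)"
  unfolding antichain_in_def levz_def using grid_le_sum_eq by fastforce

lemma width_bdd: "bdd_above (card ` {S. S \<subseteq> grid k d \<and> antichain_in grid_le S})"
  by (rule bdd_aboveI[where M="card (grid k d)"]) (auto intro: card_mono finite_grid)

lemma levz_le_width: "card (levz k d z) \<le> width_grid k d"
  unfolding width_grid_def
  by (rule cSup_upper[OF _ width_bdd]) (auto simp: levz_def antichain_levz[unfolded levz_def])

lemma div2_aux: "2*a \<le> (D::nat) \<Longrightarrow> a \<le> D div 2 \<and> D div 2 \<le> D - a" by arith

lemma antichain_le_mid:
  assumes k: "k \<ge> 1" and S: "S \<subseteq> grid k d" "antichain_in grid_le S"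
  shows "card S \<le> card (levz k d (int (d + d*(k-1) div 2)))"
proof -
  define m where "m = d*(k-1) div 2"
  have "\<forall>x\<in>S. \<exists>p. fst p \<in> Jc k d \<and> lo (fst p) \<le> snd p \<and> snd p \<le> d*(k-1) - lo (fst p) \<and> x = ec k (fst p) (snd p)"
  proof
    fix x assume "x \<in> S"
    then have "x \<in> grid k d" using S(1) by blast
    from scd_cover[OF k this] obtain j q where "j \<in> Jc k d" "lo j \<le> q" "q \<le> d*(k-1) - lo j" "x = ec k j q"
      by blast
    then show "\<exists>p. fst p \<in> Jc k d \<and> lo (fst p) \<le> snd p \<and> snd p \<le> d*(k-1) - lo (fst p) \<and> x = ec k (fst p) (snd p)"
      by (intro exI[of _ "(j,q)"]) simp
  qed
  from bchoice[OF this] obtain g where g: "\<forall>x\<in>S. fst (g x) \<in> Jc k d \<and> lo (fst (g x)) \<le> snd (g x) \<and> snd (g x) \<le> d*(k-1) - lo (fst (g x)) \<and> x = ec k (fst (g x)) (snd (g x))"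
    ..
  define J where "J x = fst (g x)" for x
  define Q where "Q x = snd (g x)" for x
  have JQ: "J x \<in> Jc k d" "lo (J x) \<le> Q x" "Q x \<le> d*(k-1) - lo (J x)" "x = ec k (J x) (Q x)" if "x \<in> S" for x
    using bspec[OF g that] unfolding J_def Q_def by auto
  define f where "f x = ec k (J x) m" for x
  have basic: "2 * lo (J x) \<le> d*(k-1)" if "x \<in> S" for x
    using conjunct1[OF conjunct2[OF scd_basic[OF k JQ(1)[OF that]]]] .
  have mr: "lo (J x) \<le> m" "m \<le> d*(k-1) - lo (J x)" if "x \<in> S" for x
    using div2_aux[OF basic[OF that]] unfolding m_def by auto
  have inj: "inj_on f S"
  proof (rule inj_onI)
    fix x y assume xy: "x \<in> S" "y \<in> S" "f x = f y"
    have "ec k (J x) m = ec k (J y) m" using xy(3) unfolding f_def .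
    from scd_disj[OF k JQ(1)[OF xy(1)] JQ(1)[OF xy(2)] mr[OF xy(1)] mr[OF xy(2)] this]
    have J: "J x = J y" by (rule conjunct1)
    have "grid_le x y \<or> grid_le y x"
    proof (cases "Q x \<le> Q y")
      case True
      have "grid_le (ec k (J x) (Q x)) (ec k (J x) (Q y))"
        using scd_chain[OF k JQ(1)[OF xy(1)] JQ(2)[OF xy(1)] True] JQ(3)[OF xy(2)] J by simp
      then show ?thesis using JQ(4)[OF xy(1)] JQ(4)[OF xy(2)] J by simp
    next
      case False
      then have F: "Q y \<le> Q x" by simp
      have "grid_le (ec k (J y) (Q y)) (ec k (J y) (Q x))"
        using scd_chain[OF k JQ(1)[OF xy(2)] JQ(2)[OF xy(2)] F] JQ(3)[OF xy(1)] J by simp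
      then show ?thesis using JQ(4)[OF xy(1)] JQ(4)[OF xy(2)] J by simp
    qed
    then show "x = y"
    proof (rule contrapos_pp)
      assume "x \<noteq> y"
      then have "\<not> grid_le x y" "\<not> grid_le y x" using S(2) xy(1,2) unfolding antichain_in_def by auto
      then show "\<not> (grid_le x y \<or> grid_le y x)" by blast
    qed
  qed
  have img: "f ` S \<subseteq> levz k d (int (d + m))"
  proof
    fix z assume "z \<in> f ` S"
    then obtain x where x: "x \<in> S" "z = f x" by blast
    have "ec k (J x) m \<in> grid k d \<and> sum_list (ec k (J x) m) = d + m"
      using scd_basic[OF k JQ(1)[OF x(1)]] mr[OF x(1)] by blast
    then show "z \<in> levz k d (int (d + m))" using x(2) unfolding f_def levz_def by simp
  qed
  have "card S = card (f ` S)" using card_image[OF inj] by simp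
  also have "\<dots> \<le> card (levz k d (int (d + m)))" by (rule card_mono[OF finite_levz img])
  finally show ?thesis unfolding m_def .
qed

lemma width_le_mid:
  assumes k: "k \<ge> 1"
  shows "width_grid k d \<le> card (levz k d (int (d + d*(k-1) div 2)))"
  unfolding width_grid_def
proof (rule cSup_least)
  show "card ` {S. S \<subseteq> grid k d \<and> antichain_in grid_le S} \<noteq> {}"
    by (auto simp: antichain_in_def)
  fix n assume "n \<in> card ` {S. S \<subseteq> grid k d \<and> antichain_in grid_le S}"
  then obtain S where "S \<subseteq> grid k d" "antichain_in grid_le S" "n = card S" by blast
  then show "n \<le> card (levz k d (int (d + d*(k-1) div 2)))" using antichain_le_mid[OF k] by simp
qed

lemma grid_sum_range:
  assumes "x \<in> grid k d"
  shows "d \<le> sum_list x \<and> sum_list x \<le> d * k"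
  using assms
proof (induction x arbitrary: d)
  case Nil
  then show ?case by (simp add: grid_def)
next
  case (Cons a x)
  obtain d' where d': "d = Suc d'" using Cons.prems by (cases d) (auto simp: grid_def)
  then have "a \<in> {1..k}" "x \<in> grid k d'" using Cons.prems grid_Cons by auto
  then show ?case using Cons.IH[of d'] d' by auto
qed

lemma width_lower:
  assumes k: "k \<ge> 1"
  shows "k ^ d \<le> (d*(k-1) + 1) * width_grid k d"
proof -
  have "grid k d \<subseteq> (\<Union>r\<in>{d..d*k}. levz k d (int r))"
    using grid_sum_range unfolding levz_def by fastforce
  then have "card (grid k d) \<le> card (\<Union>r\<in>{d..d*k}. levz k d (int r))"
    by (intro card_mono) (auto intro: finite_levz)
  also have "\<dots> \<le> (\<Sum>r\<in>{d..d*k}. card (levz k d (int r)))" by (rule card_UN_le) simp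
  also have "\<dots> \<le> (\<Sum>r\<in>{d..d*k}. width_grid k d)" by (intro sum_mono levz_le_width)
  also have "\<dots> = (d*k + 1 - d) * width_grid k d" by simp
  also have "d*k + 1 - d = d*(k-1) + 1" using k by (cases k) auto
  finally show ?thesis by (simp add: card_grid)
qed

lemma levz_Suc:
  "card (levz k (Suc d) z) = (\<Sum>y\<in>{1..k}. card (levz k d (z - int y)))"
proof -
  have eq: "levz k (Suc d) z = (\<Union>y\<in>{1..k}. (\<lambda>x. y # x) ` levz k d (z - int y))"
  proof (rule set_eqI)
    fix x show "x \<in> levz k (Suc d) z \<longleftrightarrow> x \<in> (\<Union>y\<in>{1..k}. (\<lambda>x. y # x) ` levz k d (z - int y))"
    proof (cases x)
      case Nil
      then show ?thesis by (auto simp: levz_def grid_def)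
    next
      case (Cons a l)
      have "x \<in> levz k (Suc d) z \<longleftrightarrow> a \<in> {1..k} \<and> l \<in> levz k d (z - int a)"
        unfolding Cons levz_def by (auto simp: grid_Cons)
      also have "\<dots> \<longleftrightarrow> x \<in> (\<Union>y\<in>{1..k}. (\<lambda>x. y # x) ` levz k d (z - int y))"
        unfolding Cons by blast
      finally show ?thesis .
    qed
  qed
  show ?thesis unfolding eq
    by (subst card_UN_disjoint) (auto simp: finite_levz card_image)
qed

lemma levz_le_pow: "card (levz k (Suc e) z) \<le> k ^ e"
proof -
  have "inj_on tl (levz k (Suc e) z)"
  proof (rule inj_onI)
    fix x y assume xy: "x \<in> levz k (Suc e) z" "y \<in> levz k (Suc e) z" "tl x = tl y"
    then obtain a x' b y' where "x = a # x'" "y = b # y'"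
      by (auto simp: levz_def grid_def length_Suc_conv)
    then show "x = y" using xy by (auto simp: levz_def)
  qed
  moreover have "tl ` levz k (Suc e) z \<subseteq> grid k e"
    by (auto simp: levz_def grid_def length_Suc_conv)
  ultimately have "card (levz k (Suc e) z) \<le> card (grid k e)"
    using card_inj_on_le finite_grid by blast
  then show ?thesis by (simp add: card_grid)
qed

lemma levz_step:
  "int (card (levz k (Suc d) (z + 1))) - int (card (levz k (Suc d) z))
     = int (card (levz k d z)) - int (card (levz k d (z - int k)))"
proof -
  define g where "g y = int (card (levz k d (z - int y)))" for y
  have s1: "int (card (levz k (Suc d) (z + 1))) = (\<Sum>y<k. g y)"
  proof -
    have "int (card (levz k (Suc d) (z + 1))) = (\<Sum>y\<in>{1..k}. g (y - 1))"
      unfolding levz_Suc g_def by (simp add: of_nat_sum algebra_simps)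
    also have "\<dots> = (\<Sum>y<k. g y)"
    proof -
      have "{1..k} = Suc ` {..<k}" by (auto simp: image_iff) (metis Suc_pred' less_eq_Suc_le not_le lessThan_iff)
      then show ?thesis by (simp add: sum.reindex)
    qed
    finally show ?thesis .
  qed
  have s2: "int (card (levz k (Suc d) z)) = (\<Sum>y<k. g (Suc y))"
  proof -
    have "int (card (levz k (Suc d) z)) = (\<Sum>y\<in>{1..k}. g y)"
      unfolding levz_Suc g_def by (simp add: of_nat_sum)
    also have "{1..k} = Suc ` {..<k}" by (auto simp: image_iff) (metis Suc_pred' less_eq_Suc_le not_le lessThan_iff)
    finally show ?thesis by (simp add: sum.reindex)
  qed
  have "(\<Sum>y<k. g y) - (\<Sum>y<k. g (Suc y)) = (\<Sum>y<k. g y - g (Suc y))" by (simp add: sum_subtractf)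
  also have "\<dots> = g 0 - g k" by (rule sum_lessThan_telescope')
  finally show ?thesis using s1 s2 unfolding g_def by simp
qed

lemma levz_lip:
  "\<bar>int (card (levz k (Suc (Suc e)) (z + 1))) - int (card (levz k (Suc (Suc e)) z))\<bar> \<le> int (k ^ e)"
  unfolding levz_step using levz_le_pow[of k e z] levz_le_pow[of k e "z - int k"] by linarith

lemma levz_lip_t:
  "\<bar>int (card (levz k (Suc (Suc e)) (z + int t))) - int (card (levz k (Suc (Suc e)) z))\<bar> \<le> int t * int (k ^ e)
   \<and> \<bar>int (card (levz k (Suc (Suc e)) (z - int t))) - int (card (levz k (Suc (Suc e)) z))\<bar> \<le> int t * int (k ^ e)"
proof (induction t)
  case 0
  then show ?case by simp
next
  case (Suc t)
  have a: "\<bar>int (card (levz k (Suc (Suc e)) (z + int t + 1))) - int (card (levz k (Suc (Suc e)) (z + int t)))\<bar> \<le> int (k ^ e)"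
    by (rule levz_lip)
  have b: "\<bar>int (card (levz k (Suc (Suc e)) (z - int (Suc t) + 1))) - int (card (levz k (Suc (Suc e)) (z - int (Suc t))))\<bar> \<le> int (k ^ e)"
    by (rule levz_lip)
  have c: "z - int (Suc t) + 1 = z - int t" by simp
  show ?case using Suc a b[unfolded c] by (simp add: algebra_simps) linarith
qed

fun blk :: "nat \<Rightarrow> nat \<Rightarrow> nat list \<Rightarrow> nat set" where
  "blk k b [] = {}" |
  "blk k b (y # x) = {b..<b + (y - 1)} \<union> blk k (b + (k - 1)) x"

lemma blk_sub: "set x \<subseteq> {1..k} \<Longrightarrow> blk k b x \<subseteq> {b..<b + length x * (k - 1)}"
proof (induction x arbitrary: b)
  case Nil
  then show ?case by simp
next
  case (Cons y x)
  have "blk k (b + (k - 1)) x \<subseteq> {b + (k-1)..<b + (k - 1) + length x * (k - 1)}"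
    by (rule Cons.IH) (use Cons.prems in simp)
  moreover have "y - 1 \<le> k - 1" using Cons.prems by auto
  ultimately show ?case by auto
qed

lemma finite_blk: "finite (blk k b x)"
  by (induction x arbitrary: b) auto

lemma blk_card: "set x \<subseteq> {1..k} \<Longrightarrow> card (blk k b x) = sum_list x - length x"
proof (induction x arbitrary: b)
  case Nil
  then show ?case by simp
next
  case (Cons y x)
  have sub: "blk k (b + (k - 1)) x \<subseteq> {b + (k-1)..<b + (k - 1) + length x * (k - 1)}"
    by (rule blk_sub) (use Cons.prems in simp)
  have y: "1 \<le> y" "y \<le> k" using Cons.prems by auto
  have disj: "{b..<b + (y - 1)} \<inter> blk k (b + (k - 1)) x = {}"
    using sub y by fastforce
  have "card (blk k b (y # x)) = (y - 1) + card (blk k (b + (k - 1)) x)"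
    using disj by (simp add: card_Un_disjoint finite_blk)
  also have "\<dots> = (y - 1) + (sum_list x - length x)" using Cons by simp
  also have "sum_list x \<ge> length x"
    using Cons.prems by (induction x) auto
  then have "(y - 1) + (sum_list x - length x) = sum_list (y # x) - length (y # x)" using y by simp
  finally show ?case .
qed

lemma blk_le:
  assumes "set x \<subseteq> {1..k}" "set y \<subseteq> {1..k}" "length x = length y"
  shows "blk k b x \<subseteq> blk k b y \<longleftrightarrow> grid_le x y"
  using assms(3,1,2)
proof (induction x y arbitrary: b rule: list_induct2)
  case Nil
  then show ?case by (simp add: grid_le_def)
next
  case (Cons a x c y)
  have sx: "blk k (b + (k - 1)) x \<subseteq> {b + (k-1)..}" using blk_sub[of x k "b + (k-1)"] Cons.prems by auto
  have sy: "blk k (b + (k - 1)) y \<subseteq> {b + (k-1)..}" using blk_sub[of y k "b + (k-1)"] Cons.prems by auto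
  have ac: "a - 1 \<le> k - 1" "c - 1 \<le> k - 1" "1 \<le> a" "1 \<le> c" using Cons.prems by auto
  have "blk k b (a # x) \<subseteq> blk k b (c # y) \<longleftrightarrow>
        {b..<b + (a - 1)} \<subseteq> {b..<b + (c - 1)} \<and> blk k (b + (k - 1)) x \<subseteq> blk k (b + (k - 1)) y"
  proof
    assume h: "blk k b (a # x) \<subseteq> blk k b (c # y)"
    have "{b..<b + (a - 1)} \<subseteq> {b..<b + (c - 1)}"
    proof
      fix z assume z: "z \<in> {b..<b + (a - 1)}"
      then have z1: "z \<in> blk k b (a # x)" by (simp only: blk.simps) blast
      have "z \<in> blk k b (c # y)" using h z1 by (rule subsetD)
      then have "z \<in> {b..<b + (c - 1)} \<union> blk k (b + (k-1)) y" by (simp only: blk.simps)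
      moreover have "z \<notin> blk k (b + (k - 1)) y" using sy z ac by auto
      ultimately show "z \<in> {b..<b + (c - 1)}" by blast
    qed
    moreover have "blk k (b + (k - 1)) x \<subseteq> blk k (b + (k - 1)) y"
    proof
      fix z assume z: "z \<in> blk k (b + (k - 1)) x"
      then have z1: "z \<in> blk k b (a # x)" by (simp only: blk.simps) blast
      have "z \<in> blk k b (c # y)" using h z1 by (rule subsetD)
      then have "z \<in> {b..<b + (c - 1)} \<union> blk k (b + (k-1)) y" by (simp only: blk.simps)
      moreover have "z \<notin> {b..<b + (c - 1)}" using sx z ac by auto
      ultimately show "z \<in> blk k (b + (k - 1)) y" by blast
    qed
    ultimately show "{b..<b + (a - 1)} \<subseteq> {b..<b + (c - 1)} \<and> blk k (b + (k - 1)) x \<subseteq> blk k (b + (k - 1)) y" ..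
  next
    assume "{b..<b + (a - 1)} \<subseteq> {b..<b + (c - 1)} \<and> blk k (b + (k - 1)) x \<subseteq> blk k (b + (k - 1)) y"
    then show "blk k b (a # x) \<subseteq> blk k b (c # y)" by auto
  qed
  also have "{b..<b + (a - 1)} \<subseteq> {b..<b + (c - 1)} \<longleftrightarrow> a \<le> c"
  proof
    assume h: "{b..<b + (a - 1)} \<subseteq> {b..<b + (c - 1)}"
    show "a \<le> c"
    proof (rule ccontr)
      assume "\<not> a \<le> c"
      then have "b + (c - 1) \<in> {b..<b + (a - 1)}" using ac by auto
      then show False using h by auto
    qed
  qed auto
  also have "blk k (b + (k - 1)) x \<subseteq> blk k (b + (k - 1)) y \<longleftrightarrow> grid_le x y"
    using Cons by simp
  finally show ?case by (simp add: grid_le_Cons)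
qed

definition Ix :: "nat \<Rightarrow> nat \<Rightarrow> nat list \<Rightarrow> nat set" where
  "Ix a0 k x = {..<a0} \<union> blk k a0 x"

lemma grid_set: "x \<in> grid k d \<Longrightarrow> set x \<subseteq> {1..k} \<and> length x = d"
  by (simp add: grid_def)

lemma Ix_sub: "x \<in> grid k d \<Longrightarrow> Ix a0 k x \<subseteq> {..<a0 + d * (k - 1)}"
  using blk_sub[of x k a0] grid_set[of x k d] unfolding Ix_def by auto

lemma Ix_card:
  assumes "x \<in> grid k d"
  shows "card (Ix a0 k x) = a0 + sum_list x - d"
proof -
  have s: "set x \<subseteq> {1..k}" "length x = d" using grid_set[OF assms] by auto
  have "blk k a0 x \<subseteq> {a0..}" using blk_sub[OF s(1), of a0] by auto
  then have disj: "{..<a0} \<inter> blk k a0 x = {}" by auto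
  have "sum_list x \<ge> length x" using s(1) by (induction x) auto
  then show ?thesis unfolding Ix_def using disj s blk_card[OF s(1)]
    by (simp add: card_Un_disjoint finite_blk)
qed

lemma Ix_le:
  assumes "x \<in> grid k d" "y \<in> grid k d"
  shows "Ix a0 k x \<subseteq> Ix a0 k y \<longleftrightarrow> grid_le x y"
proof -
  have s: "set x \<subseteq> {1..k}" "length x = d" "set y \<subseteq> {1..k}" "length y = d"
    using grid_set[OF assms(1)] grid_set[OF assms(2)] by auto
  have bx: "blk k a0 x \<subseteq> {a0..}" using blk_sub[OF s(1), of a0] by auto
  have by': "blk k a0 y \<subseteq> {a0..}" using blk_sub[OF s(3), of a0] by auto
  have "Ix a0 k x \<subseteq> Ix a0 k y \<longleftrightarrow> blk k a0 x \<subseteq> blk k a0 y"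
  proof
    assume h: "Ix a0 k x \<subseteq> Ix a0 k y"
    show "blk k a0 x \<subseteq> blk k a0 y"
    proof
      fix z assume z: "z \<in> blk k a0 x"
      then have "z \<in> Ix a0 k y" using h unfolding Ix_def by auto
      moreover have "z \<ge> a0" using bx z by auto
      ultimately show "z \<in> blk k a0 y" unfolding Ix_def by auto
    qed
  qed (auto simp: Ix_def)
  also have "\<dots> \<longleftrightarrow> grid_le x y" using blk_le s by simp
  finally show ?thesis .
qed

lemma grid_le_sum: "grid_le x y \<Longrightarrow> sum_list x \<le> sum_list y"
  unfolding grid_le_def by (induction x y rule: list_all2_induct) auto

lemma Ix_inj: "inj_on (Ix a0 k) (grid k d)"
proof (rule inj_onI)
  fix x y assume xy: "x \<in> grid k d" "y \<in> grid k d" "Ix a0 k x = Ix a0 k y"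
  then have "grid_le x y" "grid_le y x" using Ix_le by blast+
  then have "sum_list x = sum_list y" using grid_le_sum antisym by blast
  then show "x = y" using grid_le_sum_eq[OF \<open>grid_le x y\<close>] by simp
qed

lemma perm_exists:
  assumes A: "finite A" and UV: "U \<subseteq> A" "V \<subseteq> A" "card U = card V"
  shows "\<exists>q. (q permutes A) \<and> q ` U = V"
proof -
  have fI: "finite U" "finite V" using A UV finite_subset by auto
  obtain g where g: "bij_betw g U V" using finite_same_card_bij[OF fI UV(3)] by blast
  have "card (A - U) = card (A - V)" using UV A fI by (simp add: card_Diff_subset)
  then obtain h where h: "bij_betw h (A - U) (A - V)"
    using finite_same_card_bij[of "A - U" "A - V"] A by auto
  define q where "q x = (if x \<in> U then g x else if x \<in> A then h x else x)" for x
  have "bij_betw q U V" using g by (rule bij_betw_cong[THEN iffD1, rotated]) (simp add: q_def)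
  moreover have "bij_betw q (A - U) (A - V)" using h by (rule bij_betw_cong[THEN iffD1, rotated]) (simp add: q_def)
  ultimately have "bij_betw q (U \<union> (A - U)) (V \<union> (A - V))" by (rule bij_betw_combine) auto
  moreover have "U \<union> (A - U) = A" "V \<union> (A - V) = A" using UV by auto
  ultimately have b: "bij_betw q A A" by simp
  have "q permutes A" by (rule bij_imp_permutes[OF b]) (use UV in \<open>auto simp: q_def\<close>)
  moreover have "q ` U = V" using \<open>bij_betw q U V\<close> by (simp add: bij_betw_def)
  ultimately show ?thesis by blast
qed

lemma perm_fiber_le:
  assumes A: "finite A" and UV: "U \<subseteq> A" "V \<subseteq> A" "V' \<subseteq> A" "card V = card V'"
  shows "card {p. (p permutes A) \<and> p ` U = V} \<le> card {p. (p permutes A) \<and> p ` U = V'}"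
proof -
  obtain q where q: "q permutes A" "q ` V = V'" using perm_exists[OF A UV(2,3,4)] by blast
  have "inj_on (\<lambda>p. q \<circ> p) {p. (p permutes A) \<and> p ` U = V}"
  proof (rule inj_onI)
    fix p1 p2 assume "q \<circ> p1 = q \<circ> p2"
    then show "p1 = p2" using permutes_inj[OF q(1)] by (metis fun.inj_map inj_eq)
  qed
  moreover have "(\<lambda>p. q \<circ> p) ` {p. (p permutes A) \<and> p ` U = V} \<subseteq> {p. (p permutes A) \<and> p ` U = V'}"
    using q permutes_compose by (auto simp: image_comp[symmetric])
  moreover have "finite {p. (p permutes A) \<and> p ` U = V'}"
    using finite_permutations[OF A] by (rule finite_subset[rotated]) auto
  ultimately show ?thesis by (rule card_inj_on_le)
qed

lemma perm_fiber:
  assumes A: "finite A" and UV: "U \<subseteq> A" "V \<subseteq> A"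
  shows "card {p. (p permutes A) \<and> p ` U = V} = (if card V = card U then fact (card U) * fact (card A - card U) else 0)"
proof (cases "card V = card U")
  case False
  have E: "{p. (p permutes A) \<and> p ` U = V} = {}"
  proof -
    have "card (p ` U) = card U" if "p permutes A" for p
      using permutes_inj[OF that] by (simp add: card_image inj_on_subset)
    then show ?thesis using False by auto
  qed
  show ?thesis unfolding E using False by simp
next
  case True
  define m where "m = card U"
  define c where "c = card {p. (p permutes A) \<and> p ` U = U}"
  have eqc: "card {p. (p permutes A) \<and> p ` U = T} = c" if "T \<subseteq> A" "card T = m" for T
    using perm_fiber_le[OF A UV(1) that(1) UV(1)] perm_fiber_le[OF A UV(1) UV(1) that(1)] that(2)
    unfolding c_def m_def by simp
  define Ts where "Ts = {T. T \<subseteq> A \<and> card T = m}"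
  have "{p. p permutes A} = (\<Union>T\<in>Ts. {p. (p permutes A) \<and> p ` U = T})"
  proof (rule set_eqI)
    fix p show "p \<in> {p. p permutes A} \<longleftrightarrow> p \<in> (\<Union>T\<in>Ts. {p. (p permutes A) \<and> p ` U = T})"
    proof
      assume "p \<in> {p. p permutes A}"
      then have p: "p permutes A" by simp
      have "p ` U \<subseteq> A" using permutes_image[OF p] UV(1) by blast
      moreover have "card (p ` U) = m" using permutes_inj[OF p] unfolding m_def by (simp add: card_image inj_on_subset)
      ultimately show "p \<in> (\<Union>T\<in>Ts. {p. (p permutes A) \<and> p ` U = T})" using p unfolding Ts_def by blast
    qed auto
  qed
  then have "fact (card A) = card (\<Union>T\<in>Ts. {p. (p permutes A) \<and> p ` U = T})"
    using card_permutations[OF refl A] by simp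
  also have "\<dots> = (\<Sum>T\<in>Ts. card {p. (p permutes A) \<and> p ` U = T})"
  proof (rule card_UN_disjoint)
    show "finite Ts" unfolding Ts_def using A by simp
    show "\<forall>T\<in>Ts. finite {p. (p permutes A) \<and> p ` U = T}"
      using finite_permutations[OF A] by (auto intro: finite_subset[rotated])
  qed auto
  also have "\<dots> = (\<Sum>T\<in>Ts. c)" using eqc unfolding Ts_def by simp
  also have "\<dots> = (card A choose m) * c" unfolding Ts_def using n_subsets[OF A, of m] by simp
  finally have e: "fact (card A) = (card A choose m) * c" .
  have mA: "m \<le> card A" unfolding m_def using UV A card_mono by blast
  have "fact m * fact (card A - m) * (card A choose m) = (fact (card A) :: nat)" by (rule binomial_fact_lemma[OF mA])
  then have "(card A choose m) * c = (card A choose m) * (fact m * fact (card A - m))" using e by (metis mult.commute)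
  moreover have "(card A choose m) > 0" using mA by simp
  ultimately have "c = fact m * fact (card A - m)" by (metis mult_left_cancel not_gr0)
  then show ?thesis using True eqc[OF UV(2)] unfolding m_def by simp
qed

lemma card_filter_sum: "finite A \<Longrightarrow> card {x\<in>A. P x} = (\<Sum>x\<in>A. if P x then 1 else 0)"
  by (simp add: sum.If_cases Int_def)

lemma count_main:
  fixes G :: "'g set" and F :: "nat set set" and \<Phi> :: "'g \<Rightarrow> nat set"
  assumes G: "finite G" and F: "F \<subseteq> Pow {..<n}" and \<Phi>: "\<And>x. x \<in> G \<Longrightarrow> \<Phi> x \<subseteq> {..<n}"
    and bound: "\<And>p. p permutes {..<n} \<Longrightarrow> card {x\<in>G. p ` \<Phi> x \<in> F} \<le> L"
  shows "(\<Sum>S\<in>F. card {x\<in>G. card (\<Phi> x) = card S} * (fact (card S) * fact (n - card S))) \<le> fact n * L"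
proof -
  define Pm where "Pm = {p. p permutes ({..<n}::nat set)}"
  have fPm: "finite Pm" unfolding Pm_def by (rule finite_permutations) simp
  have cPm: "card Pm = fact n" unfolding Pm_def by (rule card_permutations) simp_all
  have fF: "finite F" using F finite_subset by (metis finite_Pow_iff finite_lessThan)
  have "(\<Sum>p\<in>Pm. card {x\<in>G. p ` \<Phi> x \<in> F}) \<le> (\<Sum>p\<in>Pm. L)"
    by (rule sum_mono) (use bound in \<open>simp add: Pm_def\<close>)
  also have "\<dots> = fact n * L" using cPm by simp
  finally have le: "(\<Sum>p\<in>Pm. card {x\<in>G. p ` \<Phi> x \<in> F}) \<le> fact n * L" .
  have "(\<Sum>p\<in>Pm. card {x\<in>G. p ` \<Phi> x \<in> F}) = (\<Sum>p\<in>Pm. \<Sum>x\<in>G. if p ` \<Phi> x \<in> F then 1 else 0)"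
    using G by (simp add: card_filter_sum)
  also have "\<dots> = (\<Sum>x\<in>G. \<Sum>p\<in>Pm. if p ` \<Phi> x \<in> F then 1 else 0)" by (rule sum.swap)
  also have "\<dots> = (\<Sum>x\<in>G. card {p\<in>Pm. p ` \<Phi> x \<in> F})" using fPm by (simp add: card_filter_sum)
  also have "\<dots> = (\<Sum>x\<in>G. \<Sum>S\<in>F. if card S = card (\<Phi> x) then fact (card S) * fact (n - card S) else 0)"
  proof (rule sum.cong[OF refl])
    fix x assume x: "x \<in> G"
    have "{p\<in>Pm. p ` \<Phi> x \<in> F} = (\<Union>S\<in>F. {p. (p permutes {..<n}) \<and> p ` \<Phi> x = S})"
      unfolding Pm_def by auto
    then have "card {p\<in>Pm. p ` \<Phi> x \<in> F} = (\<Sum>S\<in>F. card {p. (p permutes {..<n}) \<and> p ` \<Phi> x = S})"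
      using fF finite_permutations[of "{..<n}::nat set"]
      by (simp, subst card_UN_disjoint) (auto intro: finite_subset[rotated])
    also have "\<dots> = (\<Sum>S\<in>F. if card S = card (\<Phi> x) then fact (card S) * fact (n - card S) else 0)"
    proof (rule sum.cong[OF refl])
      fix S assume "S \<in> F"
      then have "S \<subseteq> {..<n}" using F by auto
      then show "card {p. (p permutes {..<n}) \<and> p ` \<Phi> x = S} = (if card S = card (\<Phi> x) then fact (card S) * fact (n - card S) else 0)"
        using perm_fiber[of "{..<n}" "\<Phi> x" S] \<Phi>[OF x] by simp
    qed
    finally show "card {p\<in>Pm. p ` \<Phi> x \<in> F} = (\<Sum>S\<in>F. if card S = card (\<Phi> x) then fact (card S) * fact (n - card S) else 0)" .
  qed
  also have "\<dots> = (\<Sum>S\<in>F. \<Sum>x\<in>G. if card S = card (\<Phi> x) then fact (card S) * fact (n - card S) else 0)"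
    by (rule sum.swap)
  also have "\<dots> = (\<Sum>S\<in>F. card {x\<in>G. card (\<Phi> x) = card S} * (fact (card S) * fact (n - card S)))"
  proof (rule sum.cong[OF refl])
    fix S
    have "(\<Sum>x\<in>G. if card S = card (\<Phi> x) then fact (card S) * fact (n - card S) else 0)
        = (\<Sum>x\<in>G. (if card (\<Phi> x) = card S then 1 else 0) * (fact (card S) * fact (n - card S) :: nat))"
      by (rule sum.cong) auto
    also have "\<dots> = (\<Sum>x\<in>G. if card (\<Phi> x) = card S then 1 else 0) * (fact (card S) * fact (n - card S))"
      by (simp add: sum_distrib_right)
    also have "\<dots> = card {x\<in>G. card (\<Phi> x) = card S} * (fact (card S) * fact (n - card S))"
      using G by (simp add: card_filter_sum)
    finally show "(\<Sum>x\<in>G. if card S = card (\<Phi> x) then fact (card S) * fact (n - card S) else 0)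
        = card {x\<in>G. card (\<Phi> x) = card S} * (fact (card S) * fact (n - card S))" .
  qed
  finally show ?thesis using le by simp
qed

lemma Sup_card_upper:
  assumes "finite Q" "F \<subseteq> Q" "\<not> E F"
  shows "card F \<le> Sup (card ` {F. F \<subseteq> Q \<and> \<not> E F})"
proof (rule cSup_upper)
  show "card F \<in> card ` {F. F \<subseteq> Q \<and> \<not> E F}" using assms by blast
  show "bdd_above (card ` {F. F \<subseteq> Q \<and> \<not> E F})"
    by (rule bdd_aboveI[where M="card Q"]) (auto intro: card_mono assms(1))
qed

lemma Sup_card_attained:
  assumes "finite Q"
  shows "Sup (card ` {F. F \<subseteq> Q \<and> \<not> E F}) = 0 \<or>
         (\<exists>F. F \<subseteq> Q \<and> \<not> E F \<and> Sup (card ` {F. F \<subseteq> Q \<and> \<not> E F}) = card F)"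
proof (cases "{F. F \<subseteq> Q \<and> \<not> E F} = {}")
  case True
  show ?thesis unfolding True by simp
next
  case False
  have fin: "finite (card ` {F. F \<subseteq> Q \<and> \<not> E F})" using assms by simp
  have ne: "card ` {F. F \<subseteq> Q \<and> \<not> E F} \<noteq> {}" using False by simp
  have "Sup (card ` {F. F \<subseteq> Q \<and> \<not> E F}) \<in> card ` {F. F \<subseteq> Q \<and> \<not> E F}"
    using cSup_eq_Max[OF fin ne] Max_in[OF fin ne] by simp
  then show ?thesis by blast
qed

lemma finite_cube: "finite (cube n)" by (simp add: cube_def)

lemma inj_image_perm: "inj p \<Longrightarrow> inj_on (\<lambda>A. p ` A) X"
  by (simp add: inj_on_def inj_image_eq_iff)

lemma weak_pullback:
  assumes p: "inj p" and G: "X \<subseteq> grid k d"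
    and free: "\<not> weak_subposet P leP F (\<subseteq>)"
    and X: "\<And>x. x \<in> X \<Longrightarrow> p ` Ix a0 k x \<in> F"
  shows "\<not> weak_subposet P leP X grid_le"
proof
  assume "weak_subposet P leP X grid_le"
  then obtain i where i: "inj_on i P" "i ` P \<subseteq> X" "\<forall>a\<in>P. \<forall>b\<in>P. leP a b \<longrightarrow> grid_le (i a) (i b)"
    unfolding weak_subposet_def by blast
  define j where "j a = p ` Ix a0 k (i a)" for a
  have "inj_on j P"
  proof (rule inj_onI)
    fix a b assume ab: "a \<in> P" "b \<in> P" "j a = j b"
    then have "Ix a0 k (i a) = Ix a0 k (i b)" unfolding j_def using p by (simp add: inj_image_eq_iff)
    moreover have "i a \<in> grid k d" "i b \<in> grid k d" using ab i(2) G by auto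
    ultimately have "i a = i b" using Ix_inj[of a0 k d] by (simp add: inj_on_def)
    then show "a = b" using i(1) ab by (simp add: inj_on_def)
  qed
  moreover have "j ` P \<subseteq> F" using i(2) X unfolding j_def by auto
  moreover have "\<forall>a\<in>P. \<forall>b\<in>P. leP a b \<longrightarrow> j a \<subseteq> j b"
  proof (intro ballI impI)
    fix a b assume ab: "a \<in> P" "b \<in> P" "leP a b"
    have "i a \<in> grid k d" "i b \<in> grid k d" using ab i(2) G by auto
    then have "Ix a0 k (i a) \<subseteq> Ix a0 k (i b)" using Ix_le i(3) ab by blast
    then show "j a \<subseteq> j b" unfolding j_def by (rule image_mono)
  qed
  ultimately have "weak_subposet P leP F (\<subseteq>)" unfolding weak_subposet_def by blast
  then show False using free by simp
qed

lemma strong_pullback: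
  assumes p: "inj p" and G: "X \<subseteq> grid k d"
    and free: "\<not> strong_subposet P leP F (\<subseteq>)"
    and X: "\<And>x. x \<in> X \<Longrightarrow> p ` Ix a0 k x \<in> F"
  shows "\<not> strong_subposet P leP X grid_le"
proof
  assume "strong_subposet P leP X grid_le"
  then obtain i where i: "inj_on i P" "i ` P \<subseteq> X" "\<forall>a\<in>P. \<forall>b\<in>P. leP a b \<longleftrightarrow> grid_le (i a) (i b)"
    unfolding strong_subposet_def by blast
  define j where "j a = p ` Ix a0 k (i a)" for a
  have "inj_on j P"
  proof (rule inj_onI)
    fix a b assume ab: "a \<in> P" "b \<in> P" "j a = j b"
    then have "Ix a0 k (i a) = Ix a0 k (i b)" unfolding j_def using p by (simp add: inj_image_eq_iff)
    moreover have "i a \<in> grid k d" "i b \<in> grid k d" using ab i(2) G by auto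
    ultimately have "i a = i b" using Ix_inj[of a0 k d] by (simp add: inj_on_def)
    then show "a = b" using i(1) ab by (simp add: inj_on_def)
  qed
  moreover have "j ` P \<subseteq> F" using i(2) X unfolding j_def by auto
  moreover have "\<forall>a\<in>P. \<forall>b\<in>P. leP a b \<longleftrightarrow> j a \<subseteq> j b"
  proof (intro ballI)
    fix a b assume ab: "a \<in> P" "b \<in> P"
    have "i a \<in> grid k d" "i b \<in> grid k d" using ab i(2) G by auto
    then have "grid_le (i a) (i b) \<longleftrightarrow> Ix a0 k (i a) \<subseteq> Ix a0 k (i b)" using Ix_le by blast
    also have "\<dots> \<longleftrightarrow> j a \<subseteq> j b" unfolding j_def using p by (simp add: inj_image_subset_iff)
    finally show "leP a b \<longleftrightarrow> j a \<subseteq> j b" using i(3) ab by blast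
  qed
  ultimately have "strong_subposet P leP F (\<subseteq>)" unfolding strong_subposet_def by blast
  then show False using free by simp
qed

lemma count_weak:
  assumes F: "F \<subseteq> cube n" "\<not> weak_subposet P leP F (\<subseteq>)" and n: "a0 + d * (k - 1) \<le> n"
  shows "(\<Sum>S\<in>F. card {x\<in>grid k d. card (Ix a0 k x) = card S} * (fact (card S) * fact (n - card S)))
          \<le> fact n * La_poset (grid k d) grid_le P leP"
proof (rule count_main)
  show "finite (grid k d)" by (rule finite_grid)
  show "F \<subseteq> Pow {..<n}" using F(1) unfolding cube_def atLeast0LessThan .
  show "Ix a0 k x \<subseteq> {..<n}" if "x \<in> grid k d" for x using Ix_sub[OF that, of a0] n by auto
  fix p :: "nat \<Rightarrow> nat" assume p: "p permutes {..<n}"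
  have "\<not> weak_subposet P leP {x\<in>grid k d. p ` Ix a0 k x \<in> F} grid_le"
    by (rule weak_pullback[OF permutes_inj[OF p] _ F(2)]) auto
  then show "card {x\<in>grid k d. p ` Ix a0 k x \<in> F} \<le> La_poset (grid k d) grid_le P leP"
    unfolding La_poset_def by (intro Sup_card_upper finite_grid) auto
qed

lemma count_strong:
  assumes F: "F \<subseteq> cube n" "\<not> strong_subposet P leP F (\<subseteq>)" and n: "a0 + d * (k - 1) \<le> n"
  shows "(\<Sum>S\<in>F. card {x\<in>grid k d. card (Ix a0 k x) = card S} * (fact (card S) * fact (n - card S)))
          \<le> fact n * La_star_poset (grid k d) grid_le P leP"
proof (rule count_main)
  show "finite (grid k d)" by (rule finite_grid)
  show "F \<subseteq> Pow {..<n}" using F(1) unfolding cube_def atLeast0LessThan .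
  show "Ix a0 k x \<subseteq> {..<n}" if "x \<in> grid k d" for x using Ix_sub[OF that, of a0] n by auto
  fix p :: "nat \<Rightarrow> nat" assume p: "p permutes {..<n}"
  have "\<not> strong_subposet P leP {x\<in>grid k d. p ` Ix a0 k x \<in> F} grid_le"
    by (rule strong_pullback[OF permutes_inj[OF p] _ F(2)]) auto
  then show "card {x\<in>grid k d. p ` Ix a0 k x \<in> F} \<le> La_star_poset (grid k d) grid_le P leP"
    unfolding La_star_poset_def by (intro Sup_card_upper finite_grid) auto
qed

lemma Ix_level:
  assumes "a0 \<le> s"
  shows "{x\<in>grid k d. card (Ix a0 k x) = s} = levz k d (int s - int a0 + int d)"
proof -
  have "card (Ix a0 k x) = s \<longleftrightarrow> int (sum_list x) = int s - int a0 + int d" if "x \<in> grid k d" for x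
    using Ix_card[OF that, of a0] grid_sum_range[OF that] assms by auto
  then show ?thesis unfolding levz_def by auto
qed

lemma lev_lower:
  assumes k: "k \<ge> 1" and d: "d \<ge> 1" and r: "d \<le> r" "r \<le> d * k"
  shows "real (card (levz k d (int r))) \<ge>
     real (width_grid k d) * (1 - real d * \<bar>real r - real (d + d*(k-1) div 2)\<bar> / real k)"
proof -
  define W where "W = width_grid k d"
  define mid where "mid = d + d*(k-1) div 2"
  define f where "f = 1 - real d * \<bar>real r - real mid\<bar> / real k"
  have Wmid: "W \<le> card (levz k d (int mid))" using width_le_mid[OF k] unfolding W_def mid_def by simp
  have "real d * \<bar>real r - real mid\<bar> / real k \<ge> 0" by simp
  then have f1: "f \<le> 1" unfolding f_def by linarith
  have Wf: "real W * f \<le> real W" using mult_left_mono[OF f1, of "real W"] by simp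
  have goal: "real W * f \<le> real (card (levz k d (int r)))"
  proof (cases "d = 1")
    case True
    have lev1: "levz k 1 (int r') = {[r']}" if "1 \<le> r'" "r' \<le> k" for r'
      using that by (auto simp: levz_def grid_def length_Suc_conv)
    have "mid \<ge> 1" "mid \<le> k" using True k unfolding mid_def by auto
    then have "W \<le> 1" using Wmid lev1[of mid] True by simp
    moreover have "card (levz k d (int r)) = 1" using lev1[of r] r True by simp
    ultimately show ?thesis using Wf by simp
  next
    case False
    then obtain e where e: "d = Suc (Suc e)" using d by (cases d; cases "d - 1") auto
    define t where "t = nat \<bar>int r - int mid\<bar>"
    have rt: "int r = int mid + int t \<or> int r = int mid - int t" unfolding t_def by auto
    have lip: "\<bar>int (card (levz k d (int r))) - int (card (levz k d (int mid)))\<bar> \<le> int t * int (k ^ e)"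
      using levz_lip_t[of k e "int mid" t] rt unfolding e by auto
    then have "int (card (levz k d (int mid))) - int t * int (k ^ e) \<le> int (card (levz k d (int r)))"
      by (simp add: abs_le_iff)
    then have "real_of_int (int (card (levz k d (int mid))) - int t * int (k ^ e)) \<le> real_of_int (int (card (levz k d (int r))))"
      by (simp only: of_int_le_iff)
    then have R: "real (card (levz k d (int mid))) - real t * real k ^ e \<le> real (card (levz k d (int r)))"
      by simp
    have M: "real (card (levz k d (int mid))) \<ge> real W" using Wmid by simp
    have kW: "real k ^ e \<le> real d * real W / real k"
    proof -
      have "k ^ d \<le> (d*(k-1) + 1) * W" using width_lower[OF k] unfolding W_def .
      also have "d*(k-1) + 1 \<le> d * k" using k d by (cases k) auto
      then have "(d*(k-1) + 1) * W \<le> d * k * W" by (rule mult_right_mono) simp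
      finally have "k ^ d \<le> d * k * W" .
      then have "real (k ^ d) \<le> real (d * k * W)" by (simp only: of_nat_le_iff)
      moreover have "real (k ^ d) = real k * real k * real k ^ e" unfolding e by simp
      moreover have "real (d * k * W) = real k * (real d * real W)" by simp
      ultimately have "real k * real k * real k ^ e \<le> real k * (real d * real W)" by (simp add: ac_simps)
      then have "real k * real k ^ e \<le> real d * real W" using k by simp
      then show ?thesis using k by (simp add: field_simps)
    qed
    have tk: "real t * real k ^ e \<le> real t * (real d * real W / real k)"
      by (rule mult_left_mono[OF kW]) simp
    have "real t = \<bar>real r - real mid\<bar>" unfolding t_def by simp
    then have "real W * f = real W - real t * (real d * real W / real k)"
      unfolding f_def by (simp add: algebra_simps)
    then show ?thesis using R M tk by linarith
  qed
  then show ?thesis unfolding W_def mid_def f_def by simp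
qed

lemma tail_sum:
  assumes n: "n > 0" and \<delta>: "\<delta> \<ge> 0"
  shows "(\<Sum>s\<in>{s. s \<le> n \<and> \<bar>real s - real n / 2\<bar> \<ge> \<delta>}. real (n choose s)) \<le> 2 ^ n * (2 * exp (-2 * \<delta>\<^sup>2 / n))"
proof -
  interpret binomial_distribution n "1/2" by unfold_locales simp
  define A where "A = {x::nat. \<bar>real x - real n * (1/2)\<bar> \<ge> \<delta>}"
  have "measure_pmf.prob (binomial_pmf n (1/2)) A \<le> 2 * exp (-2 * \<delta>\<^sup>2 / n)"
    unfolding A_def by (rule prob_abs_ge[OF n \<delta>])
  moreover have "measure_pmf.prob (binomial_pmf n (1/2)) A = measure_pmf.prob (binomial_pmf n (1/2)) (A \<inter> {..n})"
    using measure_Int_set_pmf[of "binomial_pmf n (1/2)" A] by simp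
  moreover have "measure_pmf.prob (binomial_pmf n (1/2)) (A \<inter> {..n}) = (\<Sum>s\<in>A \<inter> {..n}. real (n choose s) / 2 ^ n)"
  proof -
    have "measure_pmf.prob (binomial_pmf n (1/2)) (A \<inter> {..n}) = (\<Sum>s\<in>A \<inter> {..n}. pmf (binomial_pmf n (1/2)) s)"
      by (rule measure_measure_pmf_finite) simp
    also have "\<dots> = (\<Sum>s\<in>A \<inter> {..n}. real (n choose s) / 2 ^ n)"
    proof (rule sum.cong[OF refl])
      fix s assume "s \<in> A \<inter> {..n}"
      then have "s \<le> n" by simp
      then have "(1/2::real) ^ s * (1 - 1/2) ^ (n - s) = 1 / 2 ^ n"
        by (simp add: power_add[symmetric] power_one_over)
      then show "pmf (binomial_pmf n (1/2)) s = real (n choose s) / 2 ^ n"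
        by (simp add: pmf_binomial mult.assoc)
    qed
    finally show ?thesis .
  qed
  ultimately have "(\<Sum>s\<in>A \<inter> {..n}. real (n choose s) / 2 ^ n) \<le> 2 * exp (-2 * \<delta>\<^sup>2 / n)" by simp
  then have "(\<Sum>s\<in>A \<inter> {..n}. real (n choose s)) / 2 ^ n \<le> 2 * exp (-2 * \<delta>\<^sup>2 / n)"
    by (simp add: sum_divide_distrib)
  then have "(\<Sum>s\<in>A \<inter> {..n}. real (n choose s)) \<le> 2 ^ n * (2 * exp (-2 * \<delta>\<^sup>2 / n))"
    by (simp add: divide_le_eq mult.commute)
  moreover have "A \<inter> {..n} = {s. s \<le> n \<and> \<bar>real s - real n / 2\<bar> \<ge> \<delta>}" unfolding A_def by auto
  ultimately show ?thesis by simp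
qed

lemma central_binom_lower: "real (n choose (n div 2)) * (real n + 1) \<ge> 2 ^ n"
proof -
  have "real ((2::nat) ^ n) = real (\<Sum>s\<le>n. (n choose s))" by (simp only: choose_row_sum)
  then have "(2::real) ^ n = (\<Sum>s\<le>n. real (n choose s))" by simp
  also have "\<dots> \<le> (\<Sum>s\<le>n. real (n choose (n div 2)))"
    by (intro sum_mono) (simp add: binomial_maximum)
  also have "\<dots> = real (n choose (n div 2)) * (real n + 1)" by simp
  finally show ?thesis .
qed

lemma count_by_size:
  "card {S. S \<subseteq> {..<n} \<and> P (card S)} = (\<Sum>s\<in>{s. s \<le> n \<and> P s}. n choose s)"
proof -
  have eq: "{S. S \<subseteq> {..<n} \<and> P (card S)} = (\<Union>s\<in>{s. s \<le> n \<and> P s}. {S. S \<subseteq> {..<n} \<and> card S = s})"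
  proof (rule set_eqI)
    fix S
    show "S \<in> {S. S \<subseteq> {..<n} \<and> P (card S)} \<longleftrightarrow> S \<in> (\<Union>s\<in>{s. s \<le> n \<and> P s}. {S. S \<subseteq> {..<n} \<and> card S = s})"
    proof
      assume "S \<in> {S. S \<subseteq> {..<n} \<and> P (card S)}"
      then have "S \<subseteq> {..<n}" "P (card S)" by auto
      moreover have "card S \<le> n" using card_mono[OF _ \<open>S \<subseteq> {..<n}\<close>] by simp
      ultimately show "S \<in> (\<Union>s\<in>{s. s \<le> n \<and> P s}. {S. S \<subseteq> {..<n} \<and> card S = s})" by blast
    qed auto
  qed
  have "card (\<Union>s\<in>{s. s \<le> n \<and> P s}. {S. S \<subseteq> {..<n} \<and> card S = s}) = (\<Sum>s\<in>{s. s \<le> n \<and> P s}. card {S. S \<subseteq> {..<n} \<and> card S = s})"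
    by (rule card_UN_disjoint) auto
  also have "\<dots> = (\<Sum>s\<in>{s. s \<le> n \<and> P s}. n choose s)"
    by (rule sum.cong[OF refl]) (simp add: n_subsets)
  finally show ?thesis unfolding eq .
qed

lemma div_lower: "m > 0 \<Longrightarrow> real n < (real (n div m) + 1) * real m"
proof -
  assume m: "m > 0"
  have "n = n div m * m + n mod m" by simp
  moreover have "n mod m < m" using m by simp
  ultimately have "n < (n div m + 1) * m" by (metis add_less_cancel_left add_mult_distrib mult_1)
  then have "real n < real ((n div m + 1) * m)" by (simp only: of_nat_less_iff)
  then show ?thesis by (simp add: algebra_simps)
qed

lemma tail_eventually:
  assumes d: "d \<ge> 1" and \<epsilon>: "0 < \<epsilon>" "\<epsilon> \<le> 1"
  shows "eventually (\<lambda>n. (\<Sum>s\<in>{s. s \<le> n \<and> real (2*d) * \<bar>real s - real (n div 2)\<bar> > \<epsilon> * real (2 * d * (n div (8*d*d)) + 1)}. real (n choose s))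
            \<le> \<epsilon> * real (n choose (n div 2))) sequentially"
proof -
  define m where "m = 8*d*d"
  have m: "m > 0" using d unfolding m_def by simp
  define \<gamma> where "\<gamma> = \<epsilon> / real m"
  have \<gamma>: "\<gamma> > 0" using \<epsilon> m unfolding \<gamma>_def by simp
  have lim: "(\<lambda>n::nat. (real n + 1) * (2 * exp (-2 * (\<gamma> * real n - 2)\<^sup>2 / real n))) \<longlonglongrightarrow> 0"
    using \<gamma> by real_asymp
  have ev1: "eventually (\<lambda>n::nat. (real n + 1) * (2 * exp (-2 * (\<gamma> * real n - 2)\<^sup>2 / real n)) < \<epsilon>) sequentially"
    using order_tendstoD(2)[OF lim \<epsilon>(1)] .
  have ev2: "eventually (\<lambda>n::nat. \<gamma> * real n - 2 \<ge> 0 \<and> n > 0) sequentially"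
  proof -
    have "filterlim (\<lambda>n::nat. \<gamma> * real n - 2) at_top sequentially" using \<gamma> by real_asymp
    then have "eventually (\<lambda>n. \<gamma> * real n - 2 \<ge> 0) sequentially" unfolding filterlim_at_top by blast
    moreover have "eventually (\<lambda>n::nat. n > 0) sequentially" by (simp add: eventually_gt_at_top)
    ultimately show ?thesis by eventually_elim simp
  qed
  show ?thesis using ev1 ev2
  proof eventually_elim
    case (elim n)
    define \<delta> where "\<delta> = \<gamma> * real n - 2"
    have \<delta>: "\<delta> \<ge> 0" "n > 0" using elim unfolding \<delta>_def by auto
    define T where "T = n div m"
    have Tl: "real n < (real T + 1) * real m" unfolding T_def by (rule div_lower[OF m])
    have sub: "{s. s \<le> n \<and> real (2*d) * \<bar>real s - real (n div 2)\<bar> > \<epsilon> * real (2 * d * (n div (8*d*d)) + 1)}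
             \<subseteq> {s. s \<le> n \<and> \<bar>real s - real n / 2\<bar> \<ge> \<delta>}"
    proof
      fix s assume "s \<in> {s. s \<le> n \<and> real (2*d) * \<bar>real s - real (n div 2)\<bar> > \<epsilon> * real (2 * d * (n div (8*d*d)) + 1)}"
      then have s: "s \<le> n" "real (2*d) * \<bar>real s - real (n div 2)\<bar> > \<epsilon> * real (2 * d * T + 1)"
        unfolding T_def m_def by auto
      have "\<epsilon> * real (2 * d * T + 1) \<ge> real (2*d) * (\<epsilon> * real T)" using \<epsilon> by (simp add: algebra_simps)
      then have "real (2*d) * \<bar>real s - real (n div 2)\<bar> > real (2*d) * (\<epsilon> * real T)" using s(2) by linarith
      then have a: "\<bar>real s - real (n div 2)\<bar> > \<epsilon> * real T" using d by (simp add: mult_less_cancel_left)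
      have b: "\<epsilon> * real T > \<gamma> * real n - \<epsilon>"
      proof -
        have "real n / real m < real T + 1" using Tl m by (simp add: divide_less_eq)
        then have "\<epsilon> * (real n / real m) < \<epsilon> * (real T + 1)" using \<epsilon> by (intro mult_strict_left_mono) auto
        then show ?thesis unfolding \<gamma>_def by (simp add: algebra_simps)
      qed
      have c: "\<bar>real (n div 2) - real n / 2\<bar> \<le> 1/2" by linarith
      have "\<bar>real s - real n / 2\<bar> \<ge> \<delta>" unfolding \<delta>_def using a b c \<epsilon> by linarith
      then show "s \<in> {s. s \<le> n \<and> \<bar>real s - real n / 2\<bar> \<ge> \<delta>}" using s by simp
    qed
    have "(\<Sum>s\<in>{s. s \<le> n \<and> real (2*d) * \<bar>real s - real (n div 2)\<bar> > \<epsilon> * real (2 * d * (n div (8*d*d)) + 1)}. real (n choose s))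
         \<le> (\<Sum>s\<in>{s. s \<le> n \<and> \<bar>real s - real n / 2\<bar> \<ge> \<delta>}. real (n choose s))"
      by (rule sum_mono2[OF _ sub]) auto
    also have "\<dots> \<le> 2 ^ n * (2 * exp (-2 * \<delta>\<^sup>2 / n))" by (rule tail_sum[OF \<delta>(2) \<delta>(1)])
    also have "\<dots> \<le> real (n choose (n div 2)) * (real n + 1) * (2 * exp (-2 * \<delta>\<^sup>2 / n))"
      by (rule mult_right_mono[OF central_binom_lower]) simp
    also have "\<dots> \<le> real (n choose (n div 2)) * \<epsilon>"
      using elim(1) unfolding \<delta>_def by (simp add: mult.assoc mult_left_mono)
    finally show ?case by (simp add: mult.commute)
  qed
qed

lemma per_n:
  fixes Lg :: "nat \<Rightarrow> nat" and E :: "nat set set \<Rightarrow> bool"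
  assumes d: "d \<ge> 1" and \<epsilon>: "0 < \<epsilon>" "\<epsilon> \<le> 1" and c: "c \<ge> 0"
    and T: "T = n div (8*d*d)" "T \<ge> 1" and kdef: "k = 2*d*T + 1"
    and Lgk: "real (Lg k) \<le> (c + \<epsilon>) * real (width_grid k d)"
    and tail: "(\<Sum>s\<in>{s. s \<le> n \<and> real (2*d) * \<bar>real s - real (n div 2)\<bar> > \<epsilon> * real k}. real (n choose s))
                 \<le> \<epsilon> * real (n choose (n div 2))"
    and key: "\<And>F. (n div 2 - d*d*T) + d*(k-1) \<le> n \<Longrightarrow> F \<subseteq> cube n \<Longrightarrow> \<not> E F \<Longrightarrow>
       (\<Sum>S\<in>F. card {x\<in>grid k d. card (Ix (n div 2 - d*d*T) k x) = card S} * (fact (card S) * fact (n - card S)))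
         \<le> fact n * Lg k"
    and F: "F \<subseteq> cube n" "\<not> E F"
  shows "real (card F) \<le> ((c + \<epsilon>) / (1 - \<epsilon>/2) + \<epsilon>) * real (n choose (n div 2))"
proof -
  define h where "h = n div 2"
  define a0 where "a0 = h - d*d*T"
  define W where "W = width_grid k d"
  define bad where "bad s \<longleftrightarrow> real (2*d) * \<bar>real s - real h\<bar> > \<epsilon> * real k" for s
  define g where "g S = card {x\<in>grid k d. card (Ix a0 k x) = card S} * (fact (card S) * fact (n - card S))" for S :: "nat set"
  have k1: "k \<ge> 1" using kdef by simp
  have "T * (8*d*d) \<le> n" unfolding T by (rule div_times_less_eq_dividend)
  then have dT: "8 * (d*d*T) \<le> n" by (simp add: ac_simps)
  have hn: "2 * h \<le> n" "n \<le> 2 * h + 1" unfolding h_def by auto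
  have Tle: "T \<le> d*d*T" using d by simp
  have a0h: "a0 + d*d*T = h" unfolding a0_def using dT hn by simp
  have Dk: "d * (k - 1) = 2 * (d*d*T)" unfolding kdef by simp
  have a0n: "a0 + d * (k - 1) \<le> n" unfolding Dk using a0h dT hn by linarith
  have fF: "finite F" using F(1) finite_cube finite_subset by blast
  have Fsub: "\<And>S. S \<in> F \<Longrightarrow> S \<subseteq> {..<n}" using F(1) unfolding cube_def atLeast0LessThan by auto
  have Wpos: "W \<ge> 1"
  proof -
    have "k ^ d \<le> (d*(k-1) + 1) * W" using width_lower[OF k1] unfolding W_def .
    moreover have "k ^ d \<ge> 1" using k1 by simp
    ultimately have "1 \<le> (d*(k-1) + 1) * W" by (rule le_trans[rotated])
    then show ?thesis by (cases W) auto
  qed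
  define Fg where "Fg = {S\<in>F. \<not> bad (card S)}"
  define Fb where "Fb = {S\<in>F. bad (card S)}"
  have fact_le: "real (fact h * fact (n - h)) \<le> real (fact s * fact (n - s))" if "s \<le> n" for s
  proof -
    have e1: "fact s * fact (n - s) * (n choose s) = (fact n :: nat)" by (rule binomial_fact_lemma[OF that])
    have e2: "fact h * fact (n - h) * (n choose h) = (fact n :: nat)" by (rule binomial_fact_lemma) (use hn in simp)
    have b: "n choose s \<le> n choose h" unfolding h_def by (rule binomial_maximum)
    have p: "n choose s > 0" using that by simp
    have "fact h * fact (n - h) * (n choose s) \<le> (fact h * fact (n - h) * (n choose h) :: nat)" using b by simp
    also have "\<dots> = (fact s * fact (n - s) * (n choose s) :: nat)" using e1 e2 by simp
    finally have "fact h * fact (n - h) \<le> (fact s * fact (n - s) :: nat)" using p by simp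
    then show ?thesis by (simp only: of_nat_le_iff)
  qed
  have good_bound: "real (g S) \<ge> (1 - \<epsilon>/2) * real W * real (fact h * fact (n - h))" if S: "S \<in> Fg" for S
  proof -
    define s where "s = card S"
    have sn: "s \<le> n" using Fsub[of S] S unfolding Fg_def s_def using card_mono[of "{..<n}" S] by auto
    have good: "real (2*d) * \<bar>real s - real h\<bar> \<le> \<epsilon> * real k" using S unfolding Fg_def bad_def s_def by auto
    have dk: "real d * \<bar>real s - real h\<bar> / real k \<le> \<epsilon> / 2"
    proof -
      have "real d * \<bar>real s - real h\<bar> \<le> \<epsilon> * real k / 2" using good by simp
      then show ?thesis using k1 by (simp add: divide_le_eq)
    qed
    have sh: "\<bar>real s - real h\<bar> < real T + 1"
    proof -
      have "\<epsilon> * real k \<le> 1 * real k" using \<epsilon> by (intro mult_right_mono) auto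
      then have "real (2*d) * \<bar>real s - real h\<bar> \<le> real (2*d) * real T + 1" using good unfolding kdef by simp
      moreover have "real (2*d) \<ge> 2" using d by simp
      ultimately have "real (2*d) * \<bar>real s - real h\<bar> < real (2*d) * (real T + 1)" by (simp add: algebra_simps)
      then show ?thesis using d by (simp add: mult_less_cancel_left)
    qed
    then have s1: "s \<le> h + T" "h \<le> s + T" by linarith+
    have a0s: "a0 \<le> s" using s1 a0h Tle by linarith
    define r where "r = s - a0 + d"
    have dk2: "d * k = 2 * (d*d*T) + d" unfolding kdef by (simp add: algebra_simps)
    have r1: "d \<le> r" "r \<le> d * k" unfolding r_def dk2 using s1 a0h Tle a0s by linarith+
    have ri: "int r = int s - int a0 + int d" unfolding r_def using a0s by simp
    have mid: "d + d*(k-1) div 2 = d + d*d*T" unfolding Dk by simp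
    have rm: "real r - real (d + d*(k-1) div 2) = real s - real h"
    proof -
      have "real h = real a0 + real (d*d*T)" using a0h by (metis of_nat_add)
      then show ?thesis unfolding mid r_def using a0s by (simp add: of_nat_diff)
    qed
    have lev: "card {x\<in>grid k d. card (Ix a0 k x) = s} = card (levz k d (int r))"
      unfolding ri using Ix_level[OF a0s, of k d] by simp
    have "real (card (levz k d (int r))) \<ge> real W * (1 - real d * \<bar>real s - real h\<bar> / real k)"
      using lev_lower[OF k1 d r1] rm unfolding W_def by simp
    moreover have "real W * (1 - real d * \<bar>real s - real h\<bar> / real k) \<ge> real W * (1 - \<epsilon>/2)"
      using dk by (intro mult_left_mono) auto
    ultimately have L: "real (card {x\<in>grid k d. card (Ix a0 k x) = s}) \<ge> (1 - \<epsilon>/2) * real W"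
      using lev by (simp add: mult.commute)
    have "real (g S) = real (card {x\<in>grid k d. card (Ix a0 k x) = s}) * real (fact s * fact (n - s))"
      unfolding g_def s_def by simp
    also have "\<dots> \<ge> ((1 - \<epsilon>/2) * real W) * real (fact h * fact (n - h))"
      using L fact_le[OF sn] \<epsilon> by (intro mult_mono) auto
    finally show ?thesis by simp
  qed
  have "(\<Sum>S\<in>Fg. (1 - \<epsilon>/2) * real W * real (fact h * fact (n - h))) \<le> (\<Sum>S\<in>Fg. real (g S))"
    by (rule sum_mono) (rule good_bound)
  also have "\<dots> \<le> (\<Sum>S\<in>F. real (g S))"
    by (rule sum_mono2[OF fF]) (auto simp: Fg_def)
  also have "\<dots> = real (\<Sum>S\<in>F. g S)" by simp
  also have "\<dots> \<le> real (fact n * Lg k)"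
    using key[OF a0n[unfolded a0_def h_def] F] unfolding g_def a0_def h_def by (simp only: of_nat_le_iff)
  also have "\<dots> \<le> real (fact n) * ((c + \<epsilon>) * real W)" using Lgk unfolding W_def by (simp add: mult_left_mono)
  finally have A: "real (card Fg) * ((1 - \<epsilon>/2) * real W * real (fact h * fact (n - h))) \<le> real (fact n) * ((c + \<epsilon>) * real W)"
    by simp
  have fhpos: "real (fact h * fact (n - h)) > 0" by simp
  have binom: "real (n choose h) = real (fact n) / real (fact h * fact (n - h))"
  proof -
    have "fact h * fact (n - h) * (n choose h) = (fact n :: nat)" by (rule binomial_fact_lemma) (use hn in simp)
    then have "real (fact h * fact (n - h)) * real (n choose h) = real (fact n)" by (metis of_nat_mult)
    then show ?thesis using fhpos by (simp add: field_simps)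
  qed
  have e2: "1 - \<epsilon>/2 > 0" using \<epsilon> by simp
  have Wp: "real W > 0" using Wpos by simp
  have Fg_bound: "real (card Fg) \<le> (c + \<epsilon>) / (1 - \<epsilon>/2) * real (n choose h)"
  proof -
    have "real (card Fg) * ((1 - \<epsilon>/2) * real (fact h * fact (n - h))) * real W \<le> ((c + \<epsilon>) * real (fact n)) * real W"
      using A by (simp add: ac_simps)
    then have "real (card Fg) * ((1 - \<epsilon>/2) * real (fact h * fact (n - h))) \<le> (c + \<epsilon>) * real (fact n)"
      using Wp by simp
    then have "real (card Fg) \<le> (c + \<epsilon>) * real (fact n) / ((1 - \<epsilon>/2) * real (fact h * fact (n - h)))"
      using e2 fhpos by (simp add: le_divide_eq)
    also have "\<dots> = (c + \<epsilon>) / (1 - \<epsilon>/2) * real (n choose h)" unfolding binom by simp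
    finally show ?thesis .
  qed
  have Fb_bound: "real (card Fb) \<le> \<epsilon> * real (n choose h)"
  proof -
    have "Fb \<subseteq> {S. S \<subseteq> {..<n} \<and> bad (card S)}" using Fsub unfolding Fb_def by auto
    then have "card Fb \<le> card {S. S \<subseteq> {..<n} \<and> bad (card S)}" by (intro card_mono) auto
    also have "\<dots> = (\<Sum>s\<in>{s. s \<le> n \<and> bad s}. n choose s)" by (rule count_by_size)
    finally have "real (card Fb) \<le> (\<Sum>s\<in>{s. s \<le> n \<and> bad s}. real (n choose s))"
      by (simp only: of_nat_le_iff flip: of_nat_sum)
    also have "\<dots> \<le> \<epsilon> * real (n choose h)" using tail unfolding bad_def h_def .
    finally show ?thesis .
  qed
  have "F = Fg \<union> Fb" "Fg \<inter> Fb = {}" unfolding Fg_def Fb_def by auto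
  then have "card F = card Fg + card Fb" using fF by (simp add: card_Un_disjoint)
  then have "real (card F) = real (card Fg) + real (card Fb)" by simp
  also have "\<dots> \<le> ((c + \<epsilon>) / (1 - \<epsilon>/2) + \<epsilon>) * real (n choose h)"
    using Fg_bound Fb_bound by (simp add: algebra_simps)
  finally show ?thesis unfolding h_def .
qed

lemma width_pos: "k \<ge> 1 \<Longrightarrow> width_grid k d \<ge> 1"
proof -
  assume k1: "k \<ge> 1"
  have "k ^ d \<le> (d*(k-1) + 1) * width_grid k d" using width_lower[OF k1] .
  moreover have "k ^ d \<ge> 1" using k1 by simp
  ultimately have "1 \<le> (d*(k-1) + 1) * width_grid k d" by (rule le_trans[rotated])
  then show ?thesis by (cases "width_grid k d") auto
qed

lemma eps_bound:
  fixes c \<epsilon> :: real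
  assumes c: "c \<ge> 0" and \<epsilon>: "0 < \<epsilon>" "\<epsilon> \<le> 1"
  shows "(c + \<epsilon>) / (1 - \<epsilon>/2) + \<epsilon> \<le> c + \<epsilon> * (c + 3)"
proof -
  have p: "1 - \<epsilon>/2 > 0" using \<epsilon> by simp
  have "(1 + \<epsilon>) * (1 - \<epsilon>/2) - 1 = \<epsilon> * (1 - \<epsilon>) / 2" by (simp add: algebra_simps)
  moreover have "\<epsilon> * (1 - \<epsilon>) / 2 \<ge> 0" using \<epsilon> by simp
  ultimately have q: "(1 + \<epsilon>) * (1 - \<epsilon>/2) \<ge> 1" by linarith
  have "(c + \<epsilon>) * 1 \<le> (c + \<epsilon>) * ((1 + \<epsilon>) * (1 - \<epsilon>/2))" using q c \<epsilon> by (intro mult_left_mono) auto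
  then have "(c + \<epsilon>) \<le> ((c + \<epsilon>) * (1 + \<epsilon>)) * (1 - \<epsilon>/2)" by (simp add: ac_simps)
  then have "(c + \<epsilon>) / (1 - \<epsilon>/2) \<le> (c + \<epsilon>) * (1 + \<epsilon>)" using p by (simp add: divide_le_eq)
  moreover have "(c + \<epsilon>) * (1 + \<epsilon>) = c + c * \<epsilon> + \<epsilon> + \<epsilon> * \<epsilon>" by (simp add: algebra_simps)
  moreover have "\<epsilon> * \<epsilon> \<le> \<epsilon> * 1" using \<epsilon> by (intro mult_left_mono) auto
  ultimately show ?thesis by (simp add: algebra_simps)
qed

lemma final_abstract:
  fixes Lg :: "nat \<Rightarrow> nat" and E :: "nat \<Rightarrow> nat set set \<Rightarrow> bool" and c :: real
  assumes d: "d \<ge> 1" and c: "c \<ge> 0"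
    and hyp: "limsup (\<lambda>k. ereal (real (Lg k) / real (width_grid k d))) \<le> ereal c"
    and key: "\<And>n k a0 F. a0 + d*(k-1) \<le> n \<Longrightarrow> F \<subseteq> cube n \<Longrightarrow> \<not> E n F \<Longrightarrow>
       (\<Sum>S\<in>F. card {x\<in>grid k d. card (Ix a0 k x) = card S} * (fact (card S) * fact (n - card S)))
         \<le> fact n * Lg k"
  shows "limsup (\<lambda>n. ereal (real (Sup (card ` {F. F \<subseteq> cube n \<and> \<not> E n F})) / real (n choose (n div 2)))) \<le> ereal c"
proof (rule ereal_le_epsilon2)
  fix e :: real assume e: "0 < e"
  define \<epsilon> where "\<epsilon> = min 1 (e / (c + 3))"
  have \<epsilon>: "0 < \<epsilon>" "\<epsilon> \<le> 1" using e c unfolding \<epsilon>_def by auto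
  have \<epsilon>e: "\<epsilon> * (c + 3) \<le> e"
  proof -
    have "\<epsilon> \<le> e / (c + 3)" unfolding \<epsilon>_def by simp
    then show ?thesis using c by (simp add: le_divide_eq)
  qed
  have "limsup (\<lambda>k. ereal (real (Lg k) / real (width_grid k d))) < ereal (c + \<epsilon>)"
    using hyp \<epsilon> by (simp add: le_less_trans)
  then have "eventually (\<lambda>k. ereal (real (Lg k) / real (width_grid k d)) < ereal (c + \<epsilon>)) sequentially"
    by (rule Limsup_lessD)
  then obtain K where K: "\<And>k. k \<ge> K \<Longrightarrow> real (Lg k) / real (width_grid k d) < c + \<epsilon>"
    unfolding eventually_sequentially by auto
  obtain N1 where N1: "\<And>n. n \<ge> N1 \<Longrightarrow> (\<Sum>s\<in>{s. s \<le> n \<and> real (2*d) * \<bar>real s - real (n div 2)\<bar> > \<epsilon> * real (2 * d * (n div (8*d*d)) + 1)}. real (n choose s))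
            \<le> \<epsilon> * real (n choose (n div 2))"
    using tail_eventually[OF d \<epsilon>] unfolding eventually_sequentially by auto
  define B where "B = (c + \<epsilon>) / (1 - \<epsilon>/2) + \<epsilon>"
  have B: "B \<le> c + e" using eps_bound[OF c \<epsilon>] \<epsilon>e unfolding B_def by linarith
  have B0: "B \<ge> 0" unfolding B_def using c \<epsilon> by simp
  have "eventually (\<lambda>n. ereal (real (Sup (card ` {F. F \<subseteq> cube n \<and> \<not> E n F})) / real (n choose (n div 2)))
          \<le> ereal c + ereal e) sequentially"
    unfolding eventually_sequentially
  proof (intro exI[of _ "max N1 (8*d*d*(K+1))"] allI impI)
    fix n assume n: "max N1 (8*d*d*(K+1)) \<le> n"
    define T where "T = n div (8*d*d)"
    define k where "k = 2*d*T + 1"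
    have m0: "8*d*d \<noteq> 0" using d by simp
    have "(8*d*d*(K+1)) div (8*d*d) \<le> n div (8*d*d)" using n by (intro div_le_mono) simp
    moreover have "(8*d*d*(K+1)) div (8*d*d) = K + 1" using m0 by (rule nonzero_mult_div_cancel_left)
    ultimately have "K + 1 \<le> T" unfolding T_def by simp
    moreover have "T \<le> 2*d*T" using d by simp
    ultimately have T1: "T \<ge> 1" and kK: "k \<ge> K" unfolding k_def by linarith+
    have k1: "k \<ge> 1" unfolding k_def by simp
    have Wp: "real (width_grid k d) > 0" using width_pos[OF k1, of d] by simp
    have Lgk: "real (Lg k) \<le> (c + \<epsilon>) * real (width_grid k d)"
      using K[OF kK] Wp by (simp add: divide_less_eq less_imp_le)
    have tail: "(\<Sum>s\<in>{s. s \<le> n \<and> real (2*d) * \<bar>real s - real (n div 2)\<bar> > \<epsilon> * real k}. real (n choose s))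
                 \<le> \<epsilon> * real (n choose (n div 2))"
      using N1[of n] n unfolding k_def T_def by simp
    have Fb: "real (card F) \<le> B * real (n choose (n div 2))" if "F \<subseteq> cube n" "\<not> E n F" for F
      unfolding B_def
      by (rule per_n[where Lg=Lg and E="E n" and n=n and k=k and T=T and d=d and c=c and \<epsilon>=\<epsilon> and F=F,
            OF d \<epsilon> c T_def T1 k_def Lgk tail]) (use key that in auto)
    have binpos: "real (n choose (n div 2)) > 0" by simp
    have "real (Sup (card ` {F. F \<subseteq> cube n \<and> \<not> E n F})) \<le> B * real (n choose (n div 2))"
    proof -
      from Sup_card_attained[OF finite_cube, of n "E n"]
      show ?thesis
      proof
        assume "Sup (card ` {F. F \<subseteq> cube n \<and> \<not> E n F}) = 0"
        then show ?thesis using B0 binpos by simp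
      next
        assume "\<exists>F. F \<subseteq> cube n \<and> \<not> E n F \<and> Sup (card ` {F. F \<subseteq> cube n \<and> \<not> E n F}) = card F"
        then obtain F where "F \<subseteq> cube n" "\<not> E n F" "Sup (card ` {F. F \<subseteq> cube n \<and> \<not> E n F}) = card F" by blast
        then show ?thesis using Fb by simp
      qed
    qed
    then have "real (Sup (card ` {F. F \<subseteq> cube n \<and> \<not> E n F})) / real (n choose (n div 2)) \<le> B"
      using binpos by (simp add: divide_le_eq)
    then show "ereal (real (Sup (card ` {F. F \<subseteq> cube n \<and> \<not> E n F})) / real (n choose (n div 2))) \<le> ereal c + ereal e"
      using B by simp
  qed
  then show "limsup (\<lambda>n. ereal (real (Sup (card ` {F. F \<subseteq> cube n \<and> \<not> E n F})) / real (n choose (n div 2)))) \<le> ereal c + ereal e"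
    by (rule Limsup_bounded)
qed

theorem corollary1p4:
  fixes d :: nat and P :: "'a set" and leP :: "'a \<Rightarrow> 'a \<Rightarrow> bool" and c :: real
  assumes "d > 0" and "finite_poset P leP" and "c \<ge> 0"
  shows "(limsup (\<lambda>k. ereal (real (La_poset (grid k d) grid_le P leP) / real (width_grid k d))) \<le> ereal c
            \<longrightarrow> limsup (\<lambda>n. ereal (real (La n P leP) / real (n choose (n div 2)))) \<le> ereal c)
       \<and> (limsup (\<lambda>k. ereal (real (La_star_poset (grid k d) grid_le P leP) / real (width_grid k d))) \<le> ereal c
            \<longrightarrow> limsup (\<lambda>n. ereal (real (La_star n P leP) / real (n choose (n div 2)))) \<le> ereal c)"
proof (intro conjI impI)
  have d: "d \<ge> 1" using assms(1) by simp
  assume hyp: "limsup (\<lambda>k. ereal (real (La_poset (grid k d) grid_le P leP) / real (width_grid k d))) \<le> ereal c"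
  have "limsup (\<lambda>n. ereal (real (Sup (card ` {F. F \<subseteq> cube n \<and> \<not> weak_subposet P leP F (\<subseteq>)})) / real (n choose (n div 2)))) \<le> ereal c"
    by (rule final_abstract[where Lg = "\<lambda>k. La_poset (grid k d) grid_le P leP" and E = "\<lambda>n F. weak_subposet P leP F (\<subseteq>)",
          OF d assms(3) hyp count_weak])
  then show "limsup (\<lambda>n. ereal (real (La n P leP) / real (n choose (n div 2)))) \<le> ereal c"
    unfolding La_def La_poset_def .
next
  have d: "d \<ge> 1" using assms(1) by simp
  assume hyp: "limsup (\<lambda>k. ereal (real (La_star_poset (grid k d) grid_le P leP) / real (width_grid k d))) \<le> ereal c"
  have "limsup (\<lambda>n. ereal (real (Sup (card ` {F. F \<subseteq> cube n \<and> \<not> strong_subposet P leP F (\<subseteq>)})) / real (n choose (n div 2)))) \<le> ereal c"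
    by (rule final_abstract[where Lg = "\<lambda>k. La_star_poset (grid k d) grid_le P leP" and E = "\<lambda>n F. strong_subposet P leP F (\<subseteq>)",
          OF d assms(3) hyp count_strong])
  then show "limsup (\<lambda>n. ereal (real (La_star n P leP) / real (n choose (n div 2)))) \<le> ereal c"
    unfolding La_star_def La_star_poset_def .
qed

end
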